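(* Define normal-ordered differential polynomials $\mathscr{P}^{(k)}_n$ in variables $A_{n-1},\dots,A_1,Q$ recursively by $\mathscr{P}^{(k)}_1(Q)=Q$ and, for $n\ge2$, $$\mathscr{P}^{(k)}_n(A_{n-1},\dots,A_1,Q)=(k+n-1)\,\partial\mathscr{P}^{(k+1)}_{n-1}+:\Big(Q+\sum_{i=1}^{n-1}A_i\Big)\mathscr{P}^{(k+1)}_{n-1}:,$$ where $\mathscr{P}^{(k+1)}_{n-1}=\mathscr{P}^{(k+1)}_{n-1}(A_{n-2},\dots,A_1,Q)$. Then, in the $n[0]$ realization at level $k$ (with $A_i,Q$ the currents of that realization), the field $\mathcal{F}^{(k)}_{n[0]}=-:\mathscr{P}^{(k)}_n(A_{n-1},\dots,A_1,Q)e^{-\Xi}:$ commutes with the screenings $E_i$ ($1\le i\le n-1$) and $\Psi$, i.e. lies in $\mathcal{W}_{n[0]}(k)$. Equivalently, $\mathcal{F}^{(k)}_{n[0]}=\big((k+n-1)\partial+n\mathcal{H}^{(k)}_{n[0]}-(n-1)\mathcal{H}^{(k+1)}_{(n-1)[0]}\big)\mathcal{F}^{(k+1)}_{(n-1)[0]}$, where the level-$(k+1)$ rank-$(n-1)$ realization is built from the same fields $A_{n-2},\dots,A_1,Q,Y$.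
   Context: Setup for $m=0$ at rank $n\ge2$ and generic level $k$ ($k\neq -n$), $K=k+n$: free scalar fields $\varphi=(\varphi_1,\dots,\varphi_{n+1})$ with $\partial\varphi_i(z)\partial\varphi_j(w)\sim\delta_{ij}(z-w)^{-2}$; vectors $a_{n-1},\dots,a_1,\psi,\xi\in\mathbb{C}^{n+1}$ with nonzero products $(a_i,a_i)=2K$, $(a_i,a_{i+1})=-K$ ($1\le i\le n-2$), $(a_1,\psi)=-K$, $(\psi,\psi)=1$, $(\psi,\xi)=1$, all others (incl. $(\xi,\xi)$, $(a_i,\xi)$) zero. Currents $A_i=(a_i,\partial\varphi)$, $Q=(\psi,\partial\varphi)$, $Y=(\xi,\partial\varphi)$, field $\Xi=(\xi,\varphi)$. Screenings $E_i=\oint e^{(a_i,\varphi)}$, $\Psi=\oint e^{(\psi,\varphi)}$; a field $X(w)$ commutes with $\oint s$ if the residue at $z=w$ of $s(z)X(w)$ vanishes. $\mathcal{W}_{n[0]}(k)$ is the centralizer of these screenings in the space of fields $:P(\partial\varphi)e^{p\Xi}:$, $p\in\mathbb{Z}$. Note that the rank-$(n-1)$, level-$(k+1)$ realization has the same value $K=(k+1)+(n-1)$, so its vectors $a_{n-2},\dots,a_1,\psi,\xi$ can be identified with those of the rank-$n$ level-$k$ one. $\mathcal{H}^{(k)}_{n[0]}=\ell_n(k)Y+\sum_{i=1}^{n-1}\frac{n-i}{n}A_i+Q$ with $\ell_n(k)=\frac{n-1}{n}k+n-2$. *)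

theory Defs
  imports Complex_Main "HOL-Library.Poly_Mapping"
begin

text \<open>Fields are normal-ordered products :P(d phi) e^{(beta,phi)}: .
  Inside normal ordering all free-boson fields commute, so P is an ordinary commutative
  polynomial in the variables x_(j,m) = d^m phi_j  (j < N, m >= 1), N = n+1 the number of
  scalar fields.\<close>

type_synonym var = "nat \<times> nat"
type_synonym monom = "var \<Rightarrow>\<^sub>0 nat"
type_synonym dpoly = "monom \<Rightarrow>\<^sub>0 complex"
type_synonym vec = "nat \<Rightarrow> complex"
type_synonym lpoly = "int \<Rightarrow>\<^sub>0 dpoly"   \<comment> \<open>Laurent polynomials in u = z - w\<close>
type_synonym vfield = "dpoly \<times> vec"   \<comment> \<open>(P, beta) stands for :P e^{(beta,phi)}:\<close>

definition X :: "var \<Rightarrow> dpoly" where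
  "X v = Poly_Mapping.single (Poly_Mapping.single v 1) 1"

definition pC :: "complex \<Rightarrow> dpoly" where
  "pC c = Poly_Mapping.single 0 c"

definition ip :: "nat \<Rightarrow> vec \<Rightarrow> vec \<Rightarrow> complex" where
  "ip N x y = (\<Sum>j<N. x j * y j)"

text \<open>(x, d^m phi) as a polynomial; m = 1 gives the current (x, d phi)\<close>
definition cur :: "nat \<Rightarrow> vec \<Rightarrow> nat \<Rightarrow> dpoly" where
  "cur N x m = (\<Sum>j<N. pC (x j) * X (j, m))"

definition peval :: "(complex \<Rightarrow> 'b::comm_ring_1) \<Rightarrow> (var \<Rightarrow> 'b) \<Rightarrow> dpoly \<Rightarrow> 'b" where
  "peval c \<sigma> P = sum (\<lambda>mu::monom. c (Poly_Mapping.lookup P mu) * prod (\<lambda>v::var. \<sigma> v ^ Poly_Mapping.lookup mu v) (Poly_Mapping.keys mu)) (Poly_Mapping.keys P)"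

text \<open>the derivative d on differential polynomials: the derivation x_(j,m) |-> x_(j,m+1)\<close>
definition Dp :: "dpoly \<Rightarrow> dpoly" where
  "Dp P = (\<Sum>\<mu>::monom\<in>Poly_Mapping.keys P. pC (Poly_Mapping.lookup P \<mu>) *
      (\<Sum>v::var\<in>Poly_Mapping.keys \<mu>. of_nat (Poly_Mapping.lookup \<mu> v) * X (fst v, Suc (snd v)) *
          Poly_Mapping.single (\<mu> - Poly_Mapping.single v 1) 1))"

definition lC :: "dpoly \<Rightarrow> lpoly" where
  "lC p = Poly_Mapping.single 0 p"

definition U :: "int \<Rightarrow> lpoly" where
  "U d = Poly_Mapping.single d 1"

text \<open>Wick contraction of e^{(alpha,phi)}(z) with d^m phi_j(w):
  alpha_j d_w^m log(z-w) = - alpha_j (m-1)! u^{-m}\<close>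
definition contr_subst :: "vec \<Rightarrow> var \<Rightarrow> lpoly" where
  "contr_subst \<alpha> v = lC (X v) - lC (pC (\<alpha> (fst v) * fact (snd v - 1))) * U (- int (snd v))"

text \<open>S_r = coefficient of u^r in exp(sum_{m>=1} u^m/m! (alpha, d^m phi)(w))
   (Taylor expansion of e^{(alpha,phi)(z)} around w; truncation at m <= r is exact)\<close>
definition Tser :: "nat \<Rightarrow> vec \<Rightarrow> nat \<Rightarrow> lpoly" where
  "Tser N \<alpha> r = (\<Sum>m\<in>{1..r}. lC (pC (1 / fact m) * cur N \<alpha> m) * U (int m))"

definition Sch :: "nat \<Rightarrow> vec \<Rightarrow> nat \<Rightarrow> dpoly" where
  "Sch N \<alpha> r = (\<Sum>q\<le>r. pC (1 / fact q) * Poly_Mapping.lookup (Tser N \<alpha> r ^ q) (int r))"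

text \<open>Laurent expansion in u = z-w of the singular factor of e^{(alpha,phi)}(z) :P e^{(beta,phi)}:(w),
  where d = (alpha,beta) is the exponent of (z-w)\<close>
definition Lsing :: "vec \<Rightarrow> dpoly \<Rightarrow> int \<Rightarrow> lpoly" where
  "Lsing \<alpha> P d = U d * peval (\<lambda>c. lC (pC c)) (contr_subst \<alpha>) P"

text \<open>polynomial part R of Res_{z=w} e^{(alpha,phi)}(z) :P e^{(beta,phi)}:(w) = :R e^{(alpha+beta,phi)}:(w)\<close>
definition res_poly :: "nat \<Rightarrow> vec \<Rightarrow> dpoly \<Rightarrow> int \<Rightarrow> dpoly" where
  "res_poly N \<alpha> P d =
     (\<Sum>r\<in>{r::nat. - 1 - int r \<in> Poly_Mapping.keys (Lsing \<alpha> P d)}.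
        Poly_Mapping.lookup (Lsing \<alpha> P d) (- 1 - int r) * Sch N \<alpha> r)"

text \<open>the field :P e^{(beta,phi)}: commutes with the screening \<oint> e^{(alpha,phi)}\<close>
definition commutes_scr :: "nat \<Rightarrow> vec \<Rightarrow> vfield \<Rightarrow> bool" where
  "commutes_scr N \<alpha> F \<longleftrightarrow>
     (\<exists>d::int. ip N \<alpha> (snd F) = of_int d \<and> res_poly N \<alpha> (fst F) d = 0)"

definition in_W :: "nat \<Rightarrow> (nat \<Rightarrow> vec) \<Rightarrow> vec \<Rightarrow> vec \<Rightarrow> vfield \<Rightarrow> bool" where
  "in_W n a \<psi> \<xi> F \<longleftrightarrow>
     (\<exists>p::int. snd F = (\<lambda>j. of_int p * \<xi> j)) \<and>
     (\<forall>i\<in>{1..n-1}. commutes_scr (n+1) (a i) F) \<and> commutes_scr (n+1) \<psi> F"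

fun Pcal :: "complex \<Rightarrow> nat \<Rightarrow> (nat \<Rightarrow> dpoly) \<Rightarrow> dpoly \<Rightarrow> dpoly" where
  "Pcal k 0 A Q = 0"
| "Pcal k (Suc 0) A Q = Q"
| "Pcal k (Suc (Suc n)) A Q =
     pC (k + of_nat (Suc n)) * Dp (Pcal (k + 1) (Suc n) A Q)
     + (Q + (\<Sum>i\<in>{1..Suc n}. A i)) * Pcal (k + 1) (Suc n) A Q"

definition fder :: "nat \<Rightarrow> vfield \<Rightarrow> vfield" where
  "fder N F = (Dp (fst F) + fst F * cur N (snd F) 1, snd F)"

definition fmul :: "dpoly \<Rightarrow> vfield \<Rightarrow> vfield" where
  "fmul h F = (h * fst F, snd F)"

definition fadd :: "vfield \<Rightarrow> vfield \<Rightarrow> vfield" where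
  "fadd F G = (fst F + fst G, snd F)"

definition fscale :: "complex \<Rightarrow> vfield \<Rightarrow> vfield" where
  "fscale c F = (pC c * fst F, snd F)"

text \<open>Realization n[0] at level k inside the ambient free-field space with N scalars:
  currents A_i = (a_i, d phi), Q = (psi, d phi), Y = (xi, d phi)\<close>
definition ell :: "nat \<Rightarrow> complex \<Rightarrow> complex" where
  "ell n k = (of_nat n - 1) / of_nat n * k + of_nat n - 2"

definition Hcal :: "nat \<Rightarrow> nat \<Rightarrow> complex \<Rightarrow> (nat \<Rightarrow> vec) \<Rightarrow> vec \<Rightarrow> vec \<Rightarrow> dpoly" where
  "Hcal N n k a \<psi> \<xi> = pC (ell n k) * cur N \<xi> 1
      + (\<Sum>i\<in>{1..n-1}. pC ((of_nat n - of_nat i) / of_nat n) * cur N (a i) 1) + cur N \<psi> 1"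

definition Fcal :: "nat \<Rightarrow> nat \<Rightarrow> complex \<Rightarrow> (nat \<Rightarrow> vec) \<Rightarrow> vec \<Rightarrow> vec \<Rightarrow> vfield" where
  "Fcal N n k a \<psi> \<xi> = (- Pcal k n (\<lambda>i. cur N (a i) 1) (cur N \<psi> 1), - \<xi>)"

end

theory Submission
  imports Defs
begin


definition pext :: "('a \<Rightarrow> 'b::zero \<Rightarrow> 'c::comm_monoid_add) \<Rightarrow> ('a \<Rightarrow>\<^sub>0 'b) \<Rightarrow> 'c" where
  "pext f L = (\<Sum>s\<in>Poly_Mapping.keys L. f s (Poly_Mapping.lookup L s))"

lemma pext_superset:
  assumes "finite S" "Poly_Mapping.keys L \<subseteq> S" "\<And>s. f s 0 = 0"
  shows "pext f L = (\<Sum>s\<in>S. f s (Poly_Mapping.lookup L s))"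
  unfolding pext_def
  by (rule sum.mono_neutral_left) (use assms in \<open>auto simp: in_keys_iff\<close>)

lemma pext_add:
  assumes "\<And>s a b. f s (a + b) = f s a + f s b" "\<And>s. f s 0 = 0"
  shows "pext f (L + M) = pext f L + pext f M"
proof -
  let ?S = "Poly_Mapping.keys L \<union> Poly_Mapping.keys M \<union> Poly_Mapping.keys (L+M)"
  have "pext f (L + M) = (\<Sum>s\<in>?S. f s (Poly_Mapping.lookup (L+M) s))"
    by (rule pext_superset) (auto simp: assms)
  also have "\<dots> = (\<Sum>s\<in>?S. f s (Poly_Mapping.lookup L s)) + (\<Sum>s\<in>?S. f s (Poly_Mapping.lookup M s))"
    by (simp add: lookup_add assms sum.distrib)
  also have "\<dots> = pext f L + pext f M"
    by (subst (1 2) pext_superset[where S="?S"]) (auto simp: assms)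
  finally show ?thesis .
qed

lemma pext_single:
  assumes "f s 0 = 0" shows "pext f (Poly_Mapping.single s p) = f s p"
  using assms by (cases "p = 0") (auto simp: pext_def)

lemma pext_zero[simp]: "pext f 0 = 0"
  by (simp add: pext_def)

lemma update_as_add:
  assumes "a \<notin> Poly_Mapping.keys f"
  shows "Poly_Mapping.update a b f = f + Poly_Mapping.single a b"
  using assms
  by (intro poly_mapping_eqI) (auto simp: lookup_update lookup_add lookup_single in_keys_iff when_def)

lemma pm_induct[case_names zero single add]:
  assumes "P 0" "\<And>a b. P (Poly_Mapping.single a b)"
    "\<And>f g. P f \<Longrightarrow> P g \<Longrightarrow> P (f + g)"
  shows "P (f :: 'a \<Rightarrow>\<^sub>0 'b::monoid_add)"
proof (induction f rule: update_induct)
  case const thus ?case by (rule assms(1))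
next
  case (update f a b)
  thus ?case by (simp add: update_as_add assms)
qed

lemma pm_expand: "(f :: 'a \<Rightarrow>\<^sub>0 'b::comm_monoid_add) = (\<Sum>s\<in>Poly_Mapping.keys f. Poly_Mapping.single s (Poly_Mapping.lookup f s))"
  by (intro poly_mapping_eqI)
     (auto simp: lookup_sum lookup_single when_def in_keys_iff sum.delta' intro!: sum.neutral)

lemma add_ext_eq:
  fixes F G :: "('a \<Rightarrow>\<^sub>0 'b::monoid_add) \<Rightarrow> 'c::monoid_add"
  assumes "\<And>f g. F (f + g) = F f + F g" "\<And>f g. G (f + g) = G f + G g"
    "\<And>a b. F (Poly_Mapping.single a b) = G (Poly_Mapping.single a b)"
  shows "F f = G f"
proof (induction f rule: pm_induct)
  case zero
  have "F 0 = G 0" using assms(3)[of undefined 0] by simp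
  thus ?case .
next
  case (single a b) thus ?case by (rule assms(3))
next
  case (add f g) thus ?case by (simp add: assms)
qed

lemma leibniz_ext:
  fixes F :: "('a::monoid_add \<Rightarrow>\<^sub>0 'b::comm_ring_1) \<Rightarrow> ('a \<Rightarrow>\<^sub>0 'b)"
  assumes add: "\<And>f g. F (f + g) = F f + F g"
    and sing: "\<And>a b c d. F (Poly_Mapping.single a b * Poly_Mapping.single c d)
        = F (Poly_Mapping.single a b) * Poly_Mapping.single c d + Poly_Mapping.single a b * F (Poly_Mapping.single c d)"
  shows "F (f * g) = F f * g + f * F g"
proof -
  have F0: "F 0 = 0" using add[of 0 0] by simp
  have one: "F (Poly_Mapping.single a b * g) = F (Poly_Mapping.single a b) * g + Poly_Mapping.single a b * F g" for a b g
  proof (induction g rule: pm_induct)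
    case zero thus ?case by (simp add: F0)
  next
    case (single c d) thus ?case by (rule sing)
  next
    case (add f g) thus ?case by (simp add: distrib_left distrib_right add_ac assms(1))
  qed
  show ?thesis
  proof (induction f rule: pm_induct)
    case zero thus ?case by (simp add: F0)
  next
    case (single a b) thus ?case by (rule one)
  next
    case (add f1 f2) thus ?case by (simp add: distrib_left distrib_right add_ac assms(1))
  qed
qed



lemma single0_mult: "Poly_Mapping.single 0 (a::'b::comm_ring_1) * Poly_Mapping.single 0 b = Poly_Mapping.single (0::'a::monoid_add) (a * b)"
  by (simp add: mult_single)

lemma pC_add: "pC (a + b) = pC a + pC b" by (simp add: pC_def single_add)
lemma pC_mult: "pC (a * b) = pC a * pC b" by (simp add: pC_def mult_single)
lemma pC_0[simp]: "pC 0 = 0" by (simp add: pC_def)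
lemma pC_1[simp]: "pC 1 = 1" by (simp add: pC_def)
lemma pC_uminus: "pC (- a) = - pC a" by (simp add: pC_def single_uminus)
lemma pC_diff: "pC (a - b) = pC a - pC b" by (simp add: pC_def single_diff)
lemma pC_sum: "pC (sum f S) = (\<Sum>x\<in>S. pC (f x))"
  by (induction S rule: infinite_finite_induct) (auto simp: pC_add)
lemma pC_of_nat: "pC (of_nat n) = of_nat n" by (simp add: pC_def)
lemma pC_of_int: "pC (of_int n) = of_int n" by (simp add: pC_def)

lemma lC_add: "lC (a + b) = lC a + lC b" by (simp add: lC_def single_add)
lemma lC_mult: "lC (a * b) = lC a * lC b" by (simp add: lC_def mult_single)
lemma lC_0[simp]: "lC 0 = 0" by (simp add: lC_def)
lemma lC_1[simp]: "lC 1 = 1" by (simp add: lC_def)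
lemma lC_uminus: "lC (- a) = - lC a" by (simp add: lC_def single_uminus)
lemma lC_diff: "lC (a - b) = lC a - lC b" by (simp add: lC_def single_diff)
lemma lC_sum: "lC (sum f S) = (\<Sum>x\<in>S. lC (f x))"
  by (induction S rule: infinite_finite_induct) (auto simp: lC_add)

definition mnm :: "monom \<Rightarrow> dpoly" where "mnm \<mu> = Poly_Mapping.single \<mu> 1"

lemma single_as_mono: "Poly_Mapping.single \<mu> b = pC b * mnm \<mu>"
  by (simp add: pC_def mnm_def mult_single)

lemma mono_add: "mnm (\<mu> + \<nu>) = mnm \<mu> * mnm \<nu>"
  by (simp add: mnm_def mult_single)

lemma mono_0[simp]: "mnm 0 = 1" by (simp add: mnm_def)

lemma mult_hom_ext:
  fixes F :: "('a::monoid_add \<Rightarrow>\<^sub>0 'b::comm_ring_1) \<Rightarrow> 'c::comm_ring_1"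
  assumes add: "\<And>f g. F (f + g) = F f + F g"
    and sing: "\<And>a b c d. F (Poly_Mapping.single a b * Poly_Mapping.single c d)
        = F (Poly_Mapping.single a b) * F (Poly_Mapping.single c d)"
  shows "F (f * g) = F f * F g"
proof -
  have F0: "F 0 = 0" using add[of 0 0] by simp
  have one: "F (Poly_Mapping.single a b * g) = F (Poly_Mapping.single a b) * F g" for a b g
  proof (induction g rule: pm_induct)
    case zero thus ?case by (simp add: F0)
  next
    case (single c d) thus ?case by (rule sing)
  next
    case (add f g) thus ?case by (simp add: distrib_left distrib_right add_ac assms(1))
  qed
  show ?thesis
  proof (induction f rule: pm_induct)
    case zero thus ?case by (simp add: F0)
  next
    case (single a b) thus ?case by (rule one)
  next
    case (add f1 f2) thus ?case by (simp add: distrib_left distrib_right add_ac assms(1))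
  qed
qed

definition monev :: "(var \<Rightarrow> 'b::comm_ring_1) \<Rightarrow> monom \<Rightarrow> 'b" where
  "monev \<sigma> \<mu> = (\<Prod>v\<in>Poly_Mapping.keys \<mu>. \<sigma> v ^ Poly_Mapping.lookup \<mu> v)"

lemma monev_superset:
  assumes "finite S" "Poly_Mapping.keys \<mu> \<subseteq> S"
  shows "monev \<sigma> \<mu> = (\<Prod>v\<in>S. \<sigma> v ^ Poly_Mapping.lookup \<mu> v)"
  unfolding monev_def
  by (rule prod.mono_neutral_left) (use assms in \<open>auto simp: in_keys_iff\<close>)

lemma monev_add: "monev \<sigma> (\<mu> + \<nu>) = monev \<sigma> \<mu> * monev \<sigma> \<nu>"
proof -
  let ?S = "Poly_Mapping.keys \<mu> \<union> Poly_Mapping.keys \<nu> \<union> Poly_Mapping.keys (\<mu> + \<nu>)"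
  have "monev \<sigma> (\<mu> + \<nu>) = (\<Prod>v\<in>?S. \<sigma> v ^ Poly_Mapping.lookup (\<mu>+\<nu>) v)"
    by (rule monev_superset) auto
  also have "\<dots> = (\<Prod>v\<in>?S. \<sigma> v ^ Poly_Mapping.lookup \<mu> v) * (\<Prod>v\<in>?S. \<sigma> v ^ Poly_Mapping.lookup \<nu> v)"
    by (simp add: lookup_add power_add prod.distrib)
  also have "\<dots> = monev \<sigma> \<mu> * monev \<sigma> \<nu>"
    by (subst (1 2) monev_superset[where S="?S"]) auto
  finally show ?thesis .
qed

lemma monev_0[simp]: "monev \<sigma> 0 = 1" by (simp add: monev_def)

lemma monev_single1: "monev \<sigma> (Poly_Mapping.single v 1) = \<sigma> v"
  by (simp add: monev_def del: One_nat_def)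

locale chom =
  fixes c :: "complex \<Rightarrow> 'b::comm_ring_1"
  assumes c0: "c 0 = 0" and cadd: "c (a + b) = c a + c b" and cmult: "c (a * b) = c a * c b"
begin

lemma peval_pext: "peval c \<sigma> P = pext (\<lambda>\<mu> b. c b * monev \<sigma> \<mu>) P"
  by (simp add: peval_def pext_def monev_def)

lemma peval_add: "peval c \<sigma> (P + Q) = peval c \<sigma> P + peval c \<sigma> Q"
  unfolding peval_pext by (rule pext_add) (auto simp: cadd c0 distrib_right)

lemma peval_single: "peval c \<sigma> (Poly_Mapping.single \<mu> b) = c b * monev \<sigma> \<mu>"
  unfolding peval_pext by (rule pext_single) (simp add: c0)

lemma peval_mult: "peval c \<sigma> (P * Q) = peval c \<sigma> P * peval c \<sigma> Q"
  by (rule mult_hom_ext) (auto simp: peval_add peval_single mult_single cmult monev_add)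

lemma peval_0[simp]: "peval c \<sigma> 0 = 0" by (simp add: peval_def)

lemma peval_uminus: "peval c \<sigma> (- P) = - peval c \<sigma> P"
  using peval_add[of \<sigma> P "-P"] by (simp add: eq_neg_iff_add_eq_0 add.commute)

lemma peval_diff: "peval c \<sigma> (P - Q) = peval c \<sigma> P - peval c \<sigma> Q"
  using peval_add[of \<sigma> "P - Q" Q] by (simp add: algebra_simps)

lemma peval_sum: "peval c \<sigma> (sum f S) = (\<Sum>x\<in>S. peval c \<sigma> (f x))"
  by (induction S rule: infinite_finite_induct) (auto simp: peval_add)

lemma peval_pC: "peval c \<sigma> (pC a) = c a"
  by (simp add: pC_def peval_single)

lemma peval_X: "peval c \<sigma> (X v) = c 1 * \<sigma> v"
  by (simp add: X_def peval_single monev_single1 del: One_nat_def)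

end

interpretation lch: chom "\<lambda>c. lC (pC c)"
  by unfold_locales (auto simp: pC_add pC_mult lC_add lC_mult)



declare One_nat_def[simp del]

definition dmon :: "monom \<Rightarrow> dpoly" where
  "dmon \<mu> = (\<Sum>v::var\<in>Poly_Mapping.keys \<mu>. of_nat (Poly_Mapping.lookup \<mu> v) * X (fst v, Suc (snd v)) *
          Poly_Mapping.single (\<mu> - Poly_Mapping.single v 1) 1)"

lemma Dp_pext: "Dp P = pext (\<lambda>\<mu> b. pC b * dmon \<mu>) P"
  by (simp add: Dp_def pext_def dmon_def)

lemma dmon_superset:
  assumes "finite S" "Poly_Mapping.keys \<mu> \<subseteq> S"
  shows "dmon \<mu> = (\<Sum>v\<in>S. of_nat (Poly_Mapping.lookup \<mu> v) * X (fst v, Suc (snd v)) *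
          Poly_Mapping.single (\<mu> - Poly_Mapping.single v 1) 1)"
  unfolding dmon_def
  by (rule sum.mono_neutral_left) (use assms in \<open>auto simp: in_keys_iff\<close>)

lemma monom_sub_add:
  assumes "Poly_Mapping.lookup \<mu> v \<noteq> 0"
  shows "\<mu> + \<nu> - Poly_Mapping.single v 1 = (\<mu> - Poly_Mapping.single v 1) + (\<nu>::monom)"
  using assms
  by (intro poly_mapping_eqI) (auto simp: lookup_add lookup_minus lookup_single when_def)

lemma dmon_term_split:
  fixes \<mu> \<nu> :: monom
  shows "of_nat (Poly_Mapping.lookup (\<mu> + \<nu>) v) * Poly_Mapping.single (\<mu> + \<nu> - Poly_Mapping.single v 1) (1::complex)
   = of_nat (Poly_Mapping.lookup \<mu> v) * Poly_Mapping.single (\<mu> - Poly_Mapping.single v 1) 1 * Poly_Mapping.single \<nu> 1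
   + Poly_Mapping.single \<mu> 1 * (of_nat (Poly_Mapping.lookup \<nu> v) * Poly_Mapping.single (\<nu> - Poly_Mapping.single v 1) 1)"
proof -
  have a: "of_nat (Poly_Mapping.lookup \<mu> v) * Poly_Mapping.single (\<mu> + \<nu> - Poly_Mapping.single v 1) (1::complex)
     = of_nat (Poly_Mapping.lookup \<mu> v) * (Poly_Mapping.single (\<mu> - Poly_Mapping.single v 1) 1 * Poly_Mapping.single \<nu> 1)"
  proof (cases "Poly_Mapping.lookup \<mu> v = 0")
    case False thus ?thesis by (simp add: monom_sub_add[OF False] mult_single)
  qed simp
  have b: "of_nat (Poly_Mapping.lookup \<nu> v) * Poly_Mapping.single (\<mu> + \<nu> - Poly_Mapping.single v 1) (1::complex)
     = of_nat (Poly_Mapping.lookup \<nu> v) * (Poly_Mapping.single \<mu> 1 * Poly_Mapping.single (\<nu> - Poly_Mapping.single v 1) 1)"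
  proof (cases "Poly_Mapping.lookup \<nu> v = 0")
    case False thus ?thesis using monom_sub_add[OF False, of \<mu>] by (simp add: add.commute mult_single)
  qed simp
  show ?thesis
    by (simp add: lookup_add distrib_right a b algebra_simps)
qed

lemma dmon_add: "dmon (\<mu> + \<nu>) = dmon \<mu> * mnm \<nu> + mnm \<mu> * dmon \<nu>"
proof -
  let ?S = "Poly_Mapping.keys \<mu> \<union> Poly_Mapping.keys \<nu> \<union> Poly_Mapping.keys (\<mu> + \<nu>)"
  let ?t = "\<lambda>\<mu> v. of_nat (Poly_Mapping.lookup \<mu> v) * X (fst v, Suc (snd v)) *
          Poly_Mapping.single (\<mu> - Poly_Mapping.single v 1) (1::complex)"
  have t: "?t (\<mu> + \<nu>) v = ?t \<mu> v * mnm \<nu> + mnm \<mu> * ?t \<nu> v" for v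
  proof -
    have "?t (\<mu> + \<nu>) v = X (fst v, Suc (snd v)) * (of_nat (Poly_Mapping.lookup (\<mu>+\<nu>) v) *
          Poly_Mapping.single (\<mu> + \<nu> - Poly_Mapping.single v 1) 1)" by (simp add: algebra_simps)
    also have "\<dots> = ?t \<mu> v * mnm \<nu> + mnm \<mu> * ?t \<nu> v"
      unfolding dmon_term_split mnm_def by (simp add: algebra_simps)
    finally show ?thesis .
  qed
  have "dmon (\<mu> + \<nu>) = (\<Sum>v\<in>?S. ?t (\<mu> + \<nu>) v)"
    by (rule dmon_superset) auto
  also have "\<dots> = (\<Sum>v\<in>?S. ?t \<mu> v) * mnm \<nu> + mnm \<mu> * (\<Sum>v\<in>?S. ?t \<nu> v)"
    by (simp only: t sum.distrib sum_distrib_left sum_distrib_right)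
  also have "\<dots> = dmon \<mu> * mnm \<nu> + mnm \<mu> * dmon \<nu>"
    by (subst (1 2) dmon_superset[where S="?S"]) auto
  finally show ?thesis .
qed

lemma Dp_add: "Dp (P + Q) = Dp P + Dp Q"
  unfolding Dp_pext by (rule pext_add) (auto simp: pC_add distrib_right)

lemma Dp_single: "Dp (Poly_Mapping.single \<mu> b) = pC b * dmon \<mu>"
  unfolding Dp_pext by (rule pext_single) simp

lemma Dp_mult: "Dp (P * Q) = Dp P * Q + P * Dp Q"
proof (rule leibniz_ext)
  show "Dp (f + g) = Dp f + Dp g" for f g by (rule Dp_add)
  fix a b c d
  show "Dp (Poly_Mapping.single a b * Poly_Mapping.single c d) =
        Dp (Poly_Mapping.single a b) * Poly_Mapping.single c d + Poly_Mapping.single a b * Dp (Poly_Mapping.single c d)"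
  proof -
    have "Dp (Poly_Mapping.single a b * Poly_Mapping.single c d) = pC (b * d) * dmon (a + c)"
      by (simp add: mult_single Dp_single)
    also have "\<dots> = (pC b * dmon a) * (pC d * mnm c) + (pC b * mnm a) * (pC d * dmon c)"
      by (simp add: dmon_add pC_mult algebra_simps)
    also have "\<dots> = Dp (Poly_Mapping.single a b) * Poly_Mapping.single c d + Poly_Mapping.single a b * Dp (Poly_Mapping.single c d)"
      unfolding Dp_single by (simp only: single_as_mono)
    finally show ?thesis .
  qed
qed

lemma Dp_0[simp]: "Dp 0 = 0" by (simp add: Dp_def)

lemma Dp_uminus: "Dp (- P) = - Dp P"
  using Dp_add[of P "-P"] by (simp add: eq_neg_iff_add_eq_0 add.commute)

lemma Dp_diff: "Dp (P - Q) = Dp P - Dp Q"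
  using Dp_add[of "P - Q" Q] by (simp add: algebra_simps)

lemma Dp_sum: "Dp (sum f S) = (\<Sum>x\<in>S. Dp (f x))"
  by (induction S rule: infinite_finite_induct) (auto simp: Dp_add)

lemma Dp_pC[simp]: "Dp (pC c) = 0"
  by (simp add: pC_def Dp_single dmon_def)

lemma Dp_pC_mult: "Dp (pC c * P) = pC c * Dp P"
  by (simp add: Dp_mult)

lemma Dp_X: "Dp (X (j, m)) = X (j, Suc m)"
  by (simp add: X_def Dp_single dmon_def)

lemma Dp_cur: "Dp (cur N v m) = cur N v (Suc m)"
  by (simp add: cur_def Dp_sum Dp_pC_mult Dp_X)

lemma Dp_of_nat[simp]: "Dp (of_nat n) = 0"
  using Dp_pC[of "of_nat n"] by (simp add: pC_of_nat)



definition Dl :: "lpoly \<Rightarrow> lpoly" where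
  "Dl L = pext (\<lambda>s p. Poly_Mapping.single s (Dp p)) L"

definition du :: "lpoly \<Rightarrow> lpoly" where
  "du L = pext (\<lambda>s p. Poly_Mapping.single (s - 1) (pC (of_int s) * p)) L"

lemma Dl_add: "Dl (L + M) = Dl L + Dl M"
  unfolding Dl_def by (rule pext_add) (auto simp: Dp_add single_add)

lemma Dl_single: "Dl (Poly_Mapping.single s p) = Poly_Mapping.single s (Dp p)"
  unfolding Dl_def by (rule pext_single) simp

lemma du_add: "du (L + M) = du L + du M"
  unfolding du_def by (rule pext_add) (auto simp: distrib_left single_add)

lemma du_single: "du (Poly_Mapping.single s p) = Poly_Mapping.single (s - 1) (pC (of_int s) * p)"
  unfolding du_def by (rule pext_single) simp

lemma Dl_mult: "Dl (L * M) = Dl L * M + L * Dl M"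
  by (rule leibniz_ext) (auto simp: Dl_add Dl_single mult_single Dp_mult single_add)

lemma du_mult: "du (L * M) = du L * M + L * du M"
proof (rule leibniz_ext)
  show "du (f + g) = du f + du g" for f g by (rule du_add)
  fix a b c d
  show "du (Poly_Mapping.single a b * Poly_Mapping.single c d) =
        du (Poly_Mapping.single a b) * Poly_Mapping.single c d + Poly_Mapping.single a b * du (Poly_Mapping.single c d)"
    by (simp add: du_single mult_single single_add[symmetric] pC_add algebra_simps)
qed

lemma Dl_0[simp]: "Dl 0 = 0" by (simp add: Dl_def)
lemma du_0[simp]: "du 0 = 0" by (simp add: du_def)

lemma Dl_uminus: "Dl (- P) = - Dl P"
  using Dl_add[of P "-P"] by (simp add: eq_neg_iff_add_eq_0 add.commute)
lemma Dl_diff: "Dl (P - Q) = Dl P - Dl Q"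
  using Dl_add[of "P - Q" Q] by (simp add: algebra_simps)
lemma Dl_sum: "Dl (sum f S) = (\<Sum>x\<in>S. Dl (f x))"
  by (induction S rule: infinite_finite_induct) (auto simp: Dl_add)
lemma du_uminus: "du (- P) = - du P"
  using du_add[of P "-P"] by (simp add: eq_neg_iff_add_eq_0 add.commute)
lemma du_diff: "du (P - Q) = du P - du Q"
  using du_add[of "P - Q" Q] by (simp add: algebra_simps)
lemma du_sum: "du (sum f S) = (\<Sum>x\<in>S. du (f x))"
  by (induction S rule: infinite_finite_induct) (auto simp: du_add)

lemma Dp_1[simp]: "Dp 1 = 0" using Dp_pC[of 1] by simp

lemma Dl_lC: "Dl (lC p) = lC (Dp p)" by (simp add: lC_def Dl_single)
lemma du_lC: "du (lC p) = 0" by (simp add: lC_def du_single)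
lemma Dl_U: "Dl (U d) = 0" by (simp add: U_def Dl_single)
lemma du_U: "du (U d) = lC (pC (of_int d)) * U (d - 1)"
  by (simp add: U_def du_single lC_def mult_single)

lemma lookup_Dl: "Poly_Mapping.lookup (Dl L) s = Dp (Poly_Mapping.lookup L s)"
  by (rule add_ext_eq[where F="\<lambda>L. Poly_Mapping.lookup (Dl L) s" and G="\<lambda>L. Dp (Poly_Mapping.lookup L s)"])
     (auto simp: Dl_add lookup_add Dp_add Dl_single lookup_single when_def)

lemma lookup_du: "Poly_Mapping.lookup (du L) s = pC (of_int (s + 1)) * Poly_Mapping.lookup L (s + 1)"
  by (rule add_ext_eq[where F="\<lambda>L. Poly_Mapping.lookup (du L) s" and G="\<lambda>L. pC (of_int (s + 1)) * Poly_Mapping.lookup L (s + 1)"])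
     (auto simp: du_add lookup_add distrib_left du_single lookup_single when_def)

section \<open>coefficient pairing\<close>

definition cp :: "lpoly \<Rightarrow> (int \<Rightarrow> dpoly) \<Rightarrow> int \<Rightarrow> dpoly" where
  "cp L S t = pext (\<lambda>s p. p * S (t - s)) L"

lemma cp_add: "cp (L + M) S t = cp L S t + cp M S t"
  unfolding cp_def by (rule pext_add) (auto simp: distrib_right)

lemma cp_single: "cp (Poly_Mapping.single s p) S t = p * S (t - s)"
  unfolding cp_def by (rule pext_single) simp

lemma cp_0[simp]: "cp 0 S t = 0" by (simp add: cp_def)

lemma cp_uminus: "cp (- P) S t = - cp P S t"
  using cp_add[of P "-P"] by (simp add: eq_neg_iff_add_eq_0 add.commute)
lemma cp_diff: "cp (P - Q) S t = cp P S t - cp Q S t"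
  using cp_add[of "P - Q" Q] by (simp add: algebra_simps)

lemma lookup_mult_single_left:
  "Poly_Mapping.lookup (Poly_Mapping.single a b * M) t = b * Poly_Mapping.lookup M (t - a)"
  for M :: lpoly
  by (rule add_ext_eq[where F="\<lambda>M. Poly_Mapping.lookup (Poly_Mapping.single a b * M) t"
        and G="\<lambda>M. b * Poly_Mapping.lookup M (t - a)"])
     (auto simp: distrib_left lookup_add mult_single lookup_single when_def)

lemma lookup_mult_cp: "Poly_Mapping.lookup (L * M) t = cp L (Poly_Mapping.lookup M) t"
  for L M :: lpoly
  by (rule add_ext_eq[where F="\<lambda>L. Poly_Mapping.lookup (L * M) t" and G="\<lambda>L. cp L (Poly_Mapping.lookup M) t"])
     (auto simp: distrib_right lookup_add cp_add cp_single lookup_mult_single_left)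

lemma cp_mult_single: "cp (L * Poly_Mapping.single e q) S t = q * cp L S (t - e)"
  by (rule add_ext_eq[where F="\<lambda>L. cp (L * Poly_Mapping.single e q) S t" and G="\<lambda>L. q * cp L S (t - e)"])
     (auto simp: distrib_right distrib_left cp_add cp_single mult_single algebra_simps)

lemma cp_mult_lC: "cp (lC q * L) S t = q * cp L S t"
  using cp_mult_single[of L 0 q S t] by (simp add: lC_def mult.commute)

lemma cp_mult_U: "cp (U e * L) S t = cp L S (t - e)"
  using cp_mult_single[of L e 1 S t] by (simp add: U_def mult.commute)

lemma cp_S_add: "cp L (\<lambda>r. S1 r + S2 r) t = cp L S1 t + cp L S2 t"
  by (rule add_ext_eq[where F="\<lambda>L. cp L (\<lambda>r. S1 r + S2 r) t" and G="\<lambda>L. cp L S1 t + cp L S2 t"])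
     (auto simp: cp_add cp_single algebra_simps)

lemma cp_S_diff: "cp L (\<lambda>r. S1 r - S2 r) t = cp L S1 t - cp L S2 t"
  by (rule add_ext_eq[where F="\<lambda>L. cp L (\<lambda>r. S1 r - S2 r) t" and G="\<lambda>L. cp L S1 t - cp L S2 t"])
     (auto simp: cp_add cp_single algebra_simps)

lemma cp_S_scale: "cp L (\<lambda>r. c * S r) t = c * cp L S t"
  by (rule add_ext_eq[where F="\<lambda>L. cp L (\<lambda>r. c * S r) t" and G="\<lambda>L. c * cp L S t"])
     (auto simp: cp_add cp_single algebra_simps)

lemma cp_shift: "cp L S (t + 1) = cp L (\<lambda>r. S (r + 1)) t"
  by (rule add_ext_eq[where F="\<lambda>L. cp L S (t + 1)" and G="\<lambda>L. cp L (\<lambda>r. S (r + 1)) t"])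
     (auto simp: cp_add cp_single algebra_simps)

lemma cp_cong: assumes "\<And>r. S1 r = S2 r" shows "cp L S1 t = cp L S2 t"
proof -
  have "S1 = S2" by (rule ext) (rule assms)
  thus ?thesis by simp
qed

lemma Dp_cp: "Dp (cp L S t) = cp (Dl L) S t + cp L (\<lambda>r. Dp (S r)) t"
  by (rule add_ext_eq[where F="\<lambda>L. Dp (cp L S t)" and G="\<lambda>L. cp (Dl L) S t + cp L (\<lambda>r. Dp (S r)) t"])
     (auto simp: cp_add Dp_add Dl_add cp_single Dl_single Dp_mult algebra_simps)

lemma cp_du: "cp (du L) S t = cp L (\<lambda>r. pC (of_int (t + 1 - r)) * S r) (t + 1)"
  by (rule add_ext_eq[where F="\<lambda>L. cp (du L) S t" and G="\<lambda>L. cp L (\<lambda>r. pC (of_int (t + 1 - r)) * S r) (t + 1)"])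
     (auto simp: cp_add du_add cp_single du_single algebra_simps)

section \<open>lower bounds of keys\<close>

definition lowb :: "lpoly \<Rightarrow> int \<Rightarrow> bool" where
  "lowb L a \<longleftrightarrow> (\<forall>s\<in>Poly_Mapping.keys L. a \<le> s)"

lemma lowb_mult: "lowb L a \<Longrightarrow> lowb M b \<Longrightarrow> lowb (L * M) (a + b)"
  unfolding lowb_def using keys_mult[of L M] by fastforce

lemma lowb_add: "lowb L a \<Longrightarrow> lowb M a \<Longrightarrow> lowb (L + M) a"
  unfolding lowb_def using keys_add[of L M] by fastforce

lemma lowb_sum: "(\<And>x. x \<in> S \<Longrightarrow> lowb (f x) a) \<Longrightarrow> lowb (sum f S) a"
  by (induction S rule: infinite_finite_induct) (auto simp: lowb_add, auto simp: lowb_def)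

lemma lowb_single: "a \<le> s \<Longrightarrow> lowb (Poly_Mapping.single s p) a"
  by (simp add: lowb_def)

lemma lowb_mono: "lowb L a \<Longrightarrow> b \<le> a \<Longrightarrow> lowb L b"
  by (auto simp: lowb_def)

lemma lowb_one: "lowb 1 0"
  by (simp add: lowb_def)

lemma lowb_power: "lowb L a \<Longrightarrow> lowb (L ^ q) (int q * a)"
proof (induction q)
  case 0 thus ?case by (simp add: lowb_one)
next
  case (Suc q)
  have "lowb (L * L ^ q) (a + int q * a)" by (rule lowb_mult) (use Suc in auto)
  thus ?case by (simp add: algebra_simps)
qed

lemma lowb_lookup: "lowb L a \<Longrightarrow> t < a \<Longrightarrow> Poly_Mapping.lookup L t = 0"
  unfolding lowb_def by (metis in_keys_iff not_le)

lemma lowb_lC_mult: "lowb L a \<Longrightarrow> lowb (lC p * L) a"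
  using lowb_mult[of "lC p" 0 L a] by (simp add: lC_def lowb_single)



lemma lC_U: "lC p * U m = Poly_Mapping.single m p"
  by (simp add: lC_def U_def mult_single)

lemma Tser_eq: "Tser N \<alpha> R = (\<Sum>m\<in>{1..R}. Poly_Mapping.single (int m) (pC (1 / fact m) * cur N \<alpha> m))"
  by (simp add: Tser_def lC_U)

lemma lowb_Tser: "lowb (Tser N \<alpha> R) 1"
  unfolding Tser_eq by (rule lowb_sum) (auto intro: lowb_single)

lemma lowb_Tser_pow: "lowb (Tser N \<alpha> R ^ q) (int q)"
  using lowb_power[OF lowb_Tser, of N \<alpha> R q] by simp

lemma lowb_Tser_pow0: "lowb (Tser N \<alpha> R ^ q) 0"
  by (rule lowb_mono[OF lowb_Tser_pow]) simp

lemma Tser_split: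
  assumes "r \<le> R"
  shows "\<exists>H. Tser N \<alpha> R = Tser N \<alpha> r + H \<and> lowb H (int r + 1)"
proof -
  have "{1..R} = {1..r} \<union> {r+1..R}" using assms by auto
  hence "Tser N \<alpha> R = Tser N \<alpha> r + (\<Sum>m\<in>{r+1..R}. Poly_Mapping.single (int m) (pC (1 / fact m) * cur N \<alpha> m))"
    unfolding Tser_eq by (subst sum.union_disjoint[symmetric]) auto
  moreover have "lowb (\<Sum>m\<in>{r+1..R}. Poly_Mapping.single (int m) (pC (1 / fact m) * cur N \<alpha> m)) (int r + 1)"
    by (rule lowb_sum) (auto intro: lowb_single)
  ultimately show ?thesis by blast
qed

lemma Tser_pow_split:
  assumes "r \<le> R"
  shows "\<exists>H. Tser N \<alpha> R ^ q = Tser N \<alpha> r ^ q + H \<and> lowb H (int r + 1)"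
proof (induction q)
  case 0 thus ?case by (auto simp: lowb_def)
next
  case (Suc q)
  obtain H where H: "Tser N \<alpha> R = Tser N \<alpha> r + H" "lowb H (int r + 1)"
    using Tser_split[OF assms] by blast
  obtain Hq where Hq: "Tser N \<alpha> R ^ q = Tser N \<alpha> r ^ q + Hq" "lowb Hq (int r + 1)"
    using Suc by blast
  let ?T = "Tser N \<alpha> r"
  have "Tser N \<alpha> R ^ Suc q = Tser N \<alpha> R * Tser N \<alpha> R ^ q" by simp
  also have "\<dots> = (?T + H) * (?T ^ q + Hq)" by (subst Hq(1), subst H(1), rule refl)
  also have "\<dots> = ?T ^ Suc q + (H * ?T ^ q + ?T * Hq + H * Hq)" by (simp add: algebra_simps)
  finally have "Tser N \<alpha> R ^ Suc q = ?T ^ Suc q + (H * ?T ^ q + ?T * Hq + H * Hq)" .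
  moreover have "lowb (H * ?T ^ q + ?T * Hq + H * Hq) (int r + 1)"
  proof (intro lowb_add)
    show "lowb (H * ?T ^ q) (int r + 1)"
      using lowb_mult[OF H(2) lowb_Tser_pow0] by simp
    show "lowb (?T * Hq) (int r + 1)"
      using lowb_mult[OF lowb_Tser Hq(2)] by (rule lowb_mono) simp
    show "lowb (H * Hq) (int r + 1)"
      using lowb_mult[OF H(2) Hq(2)] by (rule lowb_mono) simp
  qed
  ultimately show ?case by blast
qed

lemma Tser_pow_trunc:
  assumes "r \<le> R"
  shows "Poly_Mapping.lookup (Tser N \<alpha> R ^ q) (int r) = Poly_Mapping.lookup (Tser N \<alpha> r ^ q) (int r)"
proof -
  obtain H where "Tser N \<alpha> R ^ q = Tser N \<alpha> r ^ q + H" "lowb H (int r + 1)"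
    using Tser_pow_split[OF assms] by blast
  thus ?thesis by (simp add: lookup_add lowb_lookup)
qed

lemma Tser_pow_high:
  assumes "r < q"
  shows "Poly_Mapping.lookup (Tser N \<alpha> R ^ q) (int r) = 0"
  using lowb_lookup[OF lowb_Tser_pow] assms by simp

definition EE :: "nat \<Rightarrow> vec \<Rightarrow> nat \<Rightarrow> nat \<Rightarrow> lpoly" where
  "EE N \<alpha> R Q = (\<Sum>q\<le>Q. lC (pC (1 / fact q)) * Tser N \<alpha> R ^ q)"

lemma lookup_lC_mult: "Poly_Mapping.lookup (lC p * L) t = p * Poly_Mapping.lookup L t"
  using lookup_mult_single_left[of 0 p L t] by (simp add: lC_def)

lemma lookup_EE:
  assumes "r \<le> R" "r \<le> Q"
  shows "Poly_Mapping.lookup (EE N \<alpha> R Q) (int r) = Sch N \<alpha> r"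
proof -
  have "Poly_Mapping.lookup (EE N \<alpha> R Q) (int r) = (\<Sum>q\<le>Q. pC (1 / fact q) * Poly_Mapping.lookup (Tser N \<alpha> r ^ q) (int r))"
    by (simp add: EE_def lookup_sum lookup_lC_mult Tser_pow_trunc[OF assms(1)])
  also have "\<dots> = (\<Sum>q\<le>r. pC (1 / fact q) * Poly_Mapping.lookup (Tser N \<alpha> r ^ q) (int r))"
    by (rule sum.mono_neutral_right) (use assms in \<open>auto simp: Tser_pow_high\<close>)
  finally show ?thesis by (simp add: Sch_def)
qed

lemma lowb_EE: "lowb (EE N \<alpha> R Q) 0"
  unfolding EE_def by (rule lowb_sum) (auto intro: lowb_lC_mult lowb_Tser_pow0)

definition DD :: "lpoly \<Rightarrow> lpoly" where "DD L = Dl L - du L"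

lemma DD_add: "DD (L + M) = DD L + DD M" by (simp add: DD_def Dl_add du_add)
lemma DD_mult: "DD (L * M) = DD L * M + L * DD M" by (simp add: DD_def Dl_mult du_mult algebra_simps)
lemma DD_sum: "DD (sum f S) = (\<Sum>x\<in>S. DD (f x))" by (simp add: DD_def Dl_sum du_sum sum_subtractf)
lemma DD_pC_mult: "DD (lC (pC c) * L) = lC (pC c) * DD L"
  by (simp add: DD_def Dl_mult du_mult Dl_lC du_lC algebra_simps)

lemma DD_power: "DD (L ^ Suc q) = lC (of_nat (Suc q)) * L ^ q * DD L"
proof (induction q)
  case 0 thus ?case by (simp add: lC_1)
next
  case (Suc q)
  have "DD (L ^ Suc (Suc q)) = DD L * L ^ Suc q + L * DD (L ^ Suc q)"
    by (simp only: power_Suc[of L "Suc q"] DD_mult)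
  also have "\<dots> = DD L * L ^ Suc q + L * (lC (of_nat (Suc q)) * L ^ q * DD L)"
    by (simp only: Suc.IH)
  also have "\<dots> = (1 + lC (of_nat (Suc q))) * L ^ Suc q * DD L"
    by (simp add: algebra_simps)
  also have "1 + lC (of_nat (Suc q)) = lC (of_nat (Suc (Suc q)))"
    by (simp add: lC_def single_one[symmetric] single_add[symmetric] del: single_one)
  finally show ?case .
qed

lemma fact_inv_Suc: "(of_nat (Suc q) :: complex) * (1 / fact (Suc q)) = 1 / fact q"
proof -
  have a: "(of_nat (Suc q) :: complex) \<noteq> 0" by (simp only: of_nat_eq_0_iff)
  have b: "(fact q :: complex) \<noteq> 0" by simp
  have "fact (Suc q) = (of_nat (Suc q) :: complex) * fact q" by (rule fact_Suc)
  thus ?thesis using a b by (simp add: field_simps del: of_nat_Suc)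
qed

lemma DD_Tser:
  "DD (Tser N \<alpha> R) = Poly_Mapping.single (int R) (pC (1 / fact R) * cur N \<alpha> (Suc R)) - lC (cur N \<alpha> 1)"
proof -
  define f where "f m = Poly_Mapping.single (int m) (pC (1 / fact m) * cur N \<alpha> (Suc m))" for m
  have "Dl (Tser N \<alpha> R) = (\<Sum>m\<in>{1..R}. f m)"
    by (simp add: Tser_eq Dl_sum Dl_single Dp_pC_mult Dp_cur f_def)
  also have "\<dots> = (\<Sum>m<R. f (Suc m))"
    by (rule sum.reindex_bij_witness[where j="\<lambda>m. m - 1" and i=Suc]) auto
  finally have 1: "Dl (Tser N \<alpha> R) = (\<Sum>m<R. f (Suc m))" .
  have "du (Tser N \<alpha> R) = (\<Sum>m\<in>{1..R}. Poly_Mapping.single (int m - 1) (pC (of_nat m) * (pC (1 / fact m) * cur N \<alpha> m)))"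
    by (simp add: Tser_eq du_sum du_single)
  also have "\<dots> = (\<Sum>m<R. Poly_Mapping.single (int m) (pC (of_nat (Suc m)) * (pC (1 / fact (Suc m)) * cur N \<alpha> (Suc m))))"
    by (rule sum.reindex_bij_witness[where j="\<lambda>m. m - 1" and i=Suc]) auto
  also have "\<dots> = (\<Sum>m<R. f m)"
    by (rule sum.cong) (simp_all add: f_def mult.assoc[symmetric] pC_mult[symmetric] fact_inv_Suc del: of_nat_Suc)
  finally have 2: "du (Tser N \<alpha> R) = (\<Sum>m<R. f m)" .
  have "DD (Tser N \<alpha> R) = f R - f 0"
    unfolding DD_def 1 2 sum_subtractf[symmetric] by (rule sum_lessThan_telescope)
  thus ?thesis by (simp add: f_def lC_def One_nat_def)
qed

lemma DD_EE: "DD (EE N \<alpha> R (Suc Q)) = EE N \<alpha> R Q * DD (Tser N \<alpha> R)"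
proof -
  let ?T = "Tser N \<alpha> R"
  have "DD (EE N \<alpha> R (Suc Q)) = (\<Sum>q\<le>Suc Q. lC (pC (1 / fact q)) * DD (?T ^ q))"
    by (simp only: EE_def DD_sum DD_pC_mult)
  also have "\<dots> = lC (pC (1 / fact 0)) * DD (?T ^ 0) + (\<Sum>q\<le>Q. lC (pC (1 / fact (Suc q))) * DD (?T ^ Suc q))"
    by (rule sum.atMost_Suc_shift)
  also have "\<dots> = 0 + (\<Sum>q\<le>Q. lC (pC (1 / fact q)) * ?T ^ q * DD ?T)"
  proof -
    have B: "DD (?T ^ 0) = 0" by (simp add: DD_def lC_1[symmetric] Dl_lC du_lC del: lC_1)
    have A: "lC (pC (1 / fact (Suc q))) * DD (?T ^ Suc q) = lC (pC (1 / fact q)) * ?T ^ q * DD ?T" for q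
    proof -
      have "lC (pC (1 / fact (Suc q))) * DD (?T ^ Suc q) = (lC (pC (1 / fact (Suc q))) * lC (of_nat (Suc q))) * ?T ^ q * DD ?T"
        by (simp only: DD_power mult.assoc)
      also have "lC (pC (1 / fact (Suc q))) * lC (of_nat (Suc q)) = lC (pC ((1 / fact (Suc q)) * of_nat (Suc q)))"
        by (simp only: lC_mult pC_mult pC_of_nat)
      also have "(1 / fact (Suc q)) * of_nat (Suc q) = (1 / fact q :: complex)"
        using fact_inv_Suc[of q] by (simp only: mult.commute)
      finally show ?thesis .
    qed
    show ?thesis by (simp only: A B mult_zero_right)
  qed
  also have "\<dots> = EE N \<alpha> R Q * DD ?T"
    by (simp add: EE_def sum_distrib_right)
  finally show ?thesis .
qed

lemma Sch_rec: "pC (of_nat (Suc r)) * Sch N \<alpha> (Suc r) = Dp (Sch N \<alpha> r) + cur N \<alpha> 1 * Sch N \<alpha> r"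
proof -
  define R where "R = r + 2"
  let ?E = "EE N \<alpha> R (Suc (Suc r))"
  let ?E' = "EE N \<alpha> R (Suc r)"
  have "Poly_Mapping.lookup (DD ?E) (int r) = Dp (Sch N \<alpha> r) - pC (of_nat (Suc r)) * Sch N \<alpha> (Suc r)"
  proof -
    have "Poly_Mapping.lookup (DD ?E) (int r) = Dp (Poly_Mapping.lookup ?E (int r)) - pC (of_int (int r + 1)) * Poly_Mapping.lookup ?E (int r + 1)"
      by (simp add: DD_def lookup_minus lookup_Dl lookup_du)
    also have "Poly_Mapping.lookup ?E (int r) = Sch N \<alpha> r" by (rule lookup_EE) (auto simp: R_def)
    also have "Poly_Mapping.lookup ?E (int r + 1) = Sch N \<alpha> (Suc r)"
    proof -
      have h: "int r + 1 = int (Suc r)" by simp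
      show ?thesis unfolding h by (rule lookup_EE) (auto simp: R_def)
    qed
    finally show ?thesis by (simp add: add.commute)
  qed
  moreover have "Poly_Mapping.lookup (DD ?E) (int r) = - (cur N \<alpha> 1 * Sch N \<alpha> r)"
  proof -
    have "DD ?E = ?E' * Poly_Mapping.single (int R) (pC (1 / fact R) * cur N \<alpha> (Suc R)) - lC (cur N \<alpha> 1) * ?E'"
      by (simp add: DD_EE DD_Tser algebra_simps)
    moreover have "Poly_Mapping.lookup (?E' * Poly_Mapping.single (int R) (pC (1 / fact R) * cur N \<alpha> (Suc R))) (int r) = 0"
    proof -
      have "lowb (?E' * Poly_Mapping.single (int R) (pC (1 / fact R) * cur N \<alpha> (Suc R))) (0 + int R)"
        by (rule lowb_mult[OF lowb_EE lowb_single]) simp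
      thus ?thesis by (rule lowb_lookup) (simp add: R_def)
    qed
    moreover have "Poly_Mapping.lookup ?E' (int r) = Sch N \<alpha> r" by (rule lookup_EE) (auto simp: R_def)
    ultimately show ?thesis by (simp add: lookup_minus lookup_lC_mult)
  qed
  ultimately show ?thesis by (simp add: algebra_simps)
qed

definition Ss :: "nat \<Rightarrow> vec \<Rightarrow> int \<Rightarrow> dpoly" where
  "Ss N \<alpha> t = (if 0 \<le> t then Sch N \<alpha> (nat t) else 0)"

lemma Ss_rec: "pC (of_int (t + 1)) * Ss N \<alpha> (t + 1) = Dp (Ss N \<alpha> t) + cur N \<alpha> 1 * Ss N \<alpha> t"
proof (cases "0 \<le> t")
  case True
  then obtain r where r: "t = int r" by (metis nonneg_int_cases)
  show ?thesis using Sch_rec[of r N \<alpha>] by (simp add: Ss_def r nat_add_distrib pC_of_nat[symmetric] add.commute)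
next
  case False
  show ?thesis
  proof (cases "t = -1")
    case True thus ?thesis by (simp add: Ss_def)
  next
    case False thus ?thesis using \<open>\<not> 0 \<le> t\<close> by (simp add: Ss_def)
  qed
qed

lemma Sch_0: "Sch N \<alpha> 0 = 1" by (simp add: Sch_def)

lemma Sch_1: "Sch N \<alpha> 1 = cur N \<alpha> 1"
proof -
  have e: "{..1::nat} = {0,1}" by auto
  show ?thesis by (simp add: Sch_def Tser_eq lookup_single lookup_one e)
qed

lemma Ss_neg: "t < 0 \<Longrightarrow> Ss N \<alpha> t = 0" by (simp add: Ss_def)
lemma Ss_0: "Ss N \<alpha> 0 = 1" by (simp add: Ss_def Sch_0)
lemma Ss_1: "Ss N \<alpha> 1 = cur N \<alpha> 1" using Sch_1[of N \<alpha>] by (simp add: Ss_def One_nat_def)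



definition good :: "dpoly \<Rightarrow> bool" where
  "good P \<longleftrightarrow> (\<forall>\<mu>\<in>Poly_Mapping.keys P. \<forall>v\<in>Poly_Mapping.keys \<mu>. 1 \<le> snd v)"

lemma good_0[simp]: "good 0" by (simp add: good_def)

lemma good_add: "good P \<Longrightarrow> good Q \<Longrightarrow> good (P + Q)"
  unfolding good_def using keys_add[of P Q] by blast

lemma good_mult: "good P \<Longrightarrow> good Q \<Longrightarrow> good (P * Q)"
proof -
  assume a: "good P" "good Q"
  { fix \<mu> v assume "\<mu> \<in> Poly_Mapping.keys (P * Q)" "v \<in> Poly_Mapping.keys \<mu>"
    then obtain x y where "\<mu> = x + y" "x \<in> Poly_Mapping.keys P" "y \<in> Poly_Mapping.keys Q"
      using keys_mult[of P Q] by blast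
    moreover have "v \<in> Poly_Mapping.keys x \<union> Poly_Mapping.keys y"
      using keys_add[of x y] \<open>v \<in> Poly_Mapping.keys \<mu>\<close> \<open>\<mu> = x + y\<close> by blast
    ultimately have "1 \<le> snd v" using a by (auto simp: good_def) }
  thus "good (P * Q)" by (auto simp: good_def)
qed

lemma good_sum: "(\<And>x. x \<in> S \<Longrightarrow> good (f x)) \<Longrightarrow> good (sum f S)"
  by (induction S rule: infinite_finite_induct) (auto intro: good_add)

lemma good_pC[simp]: "good (pC c)" by (simp add: good_def pC_def)

lemma good_single_mono: "(\<And>v. v \<in> Poly_Mapping.keys \<mu> \<Longrightarrow> 1 \<le> snd v) \<Longrightarrow> good (Poly_Mapping.single \<mu> b)"
  by (simp add: good_def)

lemma good_X: "1 \<le> m \<Longrightarrow> good (X (j, m))"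
  by (simp add: X_def good_def)

lemma good_uminus: "good P \<Longrightarrow> good (- P)" by (simp add: good_def)

lemma good_diff: "good P \<Longrightarrow> good Q \<Longrightarrow> good (P - Q)"
  using good_add[of P "- Q"] good_uminus[of Q] by simp

lemma good_of_nat[simp]: "good (of_nat n)" using good_pC[of "of_nat n"] by (simp add: pC_of_nat)

lemma good_cur: "1 \<le> m \<Longrightarrow> good (cur N v m)"
  unfolding cur_def by (auto intro!: good_sum good_mult good_X)

lemma good_Dp: "good P \<Longrightarrow> good (Dp P)"
  unfolding Dp_def
proof (intro good_sum good_mult)
  fix \<mu> v assume g: "good P" and mu: "\<mu> \<in> Poly_Mapping.keys P" and v: "v \<in> Poly_Mapping.keys \<mu>"
  show "good (X (fst v, Suc (snd v)))" by (rule good_X) simp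
  show "good (Poly_Mapping.single (\<mu> - Poly_Mapping.single v 1) 1)"
  proof (rule good_single_mono)
    fix w assume "w \<in> Poly_Mapping.keys (\<mu> - Poly_Mapping.single v 1)"
    hence "w \<in> Poly_Mapping.keys \<mu>" by (auto simp: in_keys_iff lookup_minus)
    thus "1 \<le> snd w" using g mu by (auto simp: good_def)
  qed
qed auto

section \<open>the substitution sigma\<close>

definition sig :: "vec \<Rightarrow> dpoly \<Rightarrow> lpoly" where
  "sig \<alpha> P = peval (\<lambda>c. lC (pC c)) (contr_subst \<alpha>) P"

lemma sig_add: "sig \<alpha> (P + Q) = sig \<alpha> P + sig \<alpha> Q" by (simp add: sig_def lch.peval_add)
lemma sig_mult: "sig \<alpha> (P * Q) = sig \<alpha> P * sig \<alpha> Q" by (simp add: sig_def lch.peval_mult)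
lemma sig_pC: "sig \<alpha> (pC c) = lC (pC c)" by (simp add: sig_def lch.peval_pC)
lemma sig_uminus: "sig \<alpha> (- P) = - sig \<alpha> P" by (simp add: sig_def lch.peval_uminus)
lemma sig_diff: "sig \<alpha> (P - Q) = sig \<alpha> P - sig \<alpha> Q" by (simp add: sig_def lch.peval_diff)
lemma sig_sum: "sig \<alpha> (sum f S) = (\<Sum>x\<in>S. sig \<alpha> (f x))" by (simp add: sig_def lch.peval_sum)
lemma sig_X: "sig \<alpha> (X v) = contr_subst \<alpha> v" by (simp add: sig_def lch.peval_X)
lemma sig_0[simp]: "sig \<alpha> 0 = 0" by (simp add: sig_def)
lemma sig_1[simp]: "sig \<alpha> 1 = 1" using sig_pC[of \<alpha> 1] by simp

lemma sig_cur:
  assumes "1 \<le> m"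
  shows "sig \<alpha> (cur N v m) = lC (cur N v m) - lC (pC (ip N \<alpha> v * fact (m - 1))) * U (- int m)"
proof -
  have "sig \<alpha> (cur N v m) = (\<Sum>j<N. lC (pC (v j)) * (lC (X (j, m)) - lC (pC (\<alpha> j * fact (m - 1))) * U (- int m)))"
    by (simp add: cur_def sig_sum sig_mult sig_pC sig_X contr_subst_def)
  also have "\<dots> = lC (\<Sum>j<N. pC (v j) * X (j, m)) - lC (pC (\<Sum>j<N. \<alpha> j * v j * fact (m - 1))) * U (- int m)"
    by (simp add: lC_sum pC_sum lC_mult pC_mult sum_subtractf sum_distrib_right sum_distrib_left algebra_simps)
  also have "\<dots> = lC (cur N v m) - lC (pC (ip N \<alpha> v * fact (m - 1))) * U (- int m)"
    by (simp add: cur_def ip_def sum_distrib_right)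
  finally show ?thesis .
qed

lemma sig_cur1: "sig \<alpha> (cur N v 1) = lC (cur N v 1) - lC (pC (ip N \<alpha> v)) * U (- 1)"
  using sig_cur[of 1 \<alpha> N v] by simp

lemma DD_lC: "DD (lC p) = lC (Dp p)" by (simp add: DD_def Dl_lC du_lC)
lemma DD_U: "DD (U d) = - (lC (pC (of_int d)) * U (d - 1))" by (simp add: DD_def Dl_U du_U)

lemma sig_Dp_X:
  assumes "1 \<le> m"
  shows "sig \<alpha> (Dp (X (j, m))) = DD (sig \<alpha> (X (j, m)))"
proof -
  have f: "(fact m :: complex) = of_nat m * fact (m - 1)"
    using assms fact_Suc[of "m - 1"] by simp
  have "DD (sig \<alpha> (X (j, m))) = lC (X (j, Suc m)) + lC (pC (\<alpha> j * fact (m - 1))) * (lC (pC (of_int (- int m))) * U (- int m - 1))"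
    by (simp add: sig_X contr_subst_def DD_def Dl_diff du_diff Dl_mult du_mult Dl_lC du_lC Dl_U du_U Dp_X[symmetric] algebra_simps)
  also have "\<dots> = lC (X (j, Suc m)) - lC (pC (\<alpha> j * fact m)) * U (- int (Suc m))"
  proof -
    have e: "- int m - 1 = - int (Suc m)" by simp
    have "lC (pC (\<alpha> j * fact (m - 1))) * (lC (pC (of_int (- int m))) * U (- int m - 1))
        = lC (pC (\<alpha> j * fact (m - 1) * of_int (- int m))) * U (- int (Suc m))"
      by (simp only: e lC_mult pC_mult mult.assoc)
    also have "\<alpha> j * fact (m - 1) * of_int (- int m) = - (\<alpha> j * fact m)"
      by (simp add: f)
    finally show ?thesis by (simp add: lC_uminus pC_uminus)
  qed
  also have "\<dots> = sig \<alpha> (Dp (X (j, m)))"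
    by (simp add: Dp_X sig_X contr_subst_def)
  finally show ?thesis by simp
qed

definition Phi :: "vec \<Rightarrow> dpoly \<Rightarrow> lpoly" where
  "Phi \<alpha> P = sig \<alpha> (Dp P) - DD (sig \<alpha> P)"

lemma Phi_add: "Phi \<alpha> (P + Q) = Phi \<alpha> P + Phi \<alpha> Q"
  by (simp add: Phi_def Dp_add sig_add DD_add)

lemma Phi_mult: "Phi \<alpha> (P * Q) = Phi \<alpha> P * sig \<alpha> Q + sig \<alpha> P * Phi \<alpha> Q"
  by (simp add: Phi_def Dp_mult sig_mult DD_mult sig_add algebra_simps)

lemma Phi_0[simp]: "Phi \<alpha> 0 = 0" by (simp add: Phi_def DD_def)

lemma Phi_sum: "Phi \<alpha> (sum f S) = (\<Sum>x\<in>S. Phi \<alpha> (f x))"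
  by (induction S rule: infinite_finite_induct) (auto simp: Phi_add)

lemma Phi_pC: "Phi \<alpha> (pC c) = 0"
  by (simp add: Phi_def sig_pC DD_lC)

lemma Phi_X: "1 \<le> snd v \<Longrightarrow> Phi \<alpha> (X v) = 0"
  using sig_Dp_X[of "snd v" \<alpha> "fst v"] by (simp add: Phi_def)

lemma Phi_X_pow: "1 \<le> snd v \<Longrightarrow> Phi \<alpha> (X v ^ b) = 0"
proof (induction b)
  case 0 thus ?case using Phi_pC[of \<alpha> 1] by simp
next
  case (Suc b) thus ?case by (simp add: Phi_mult Phi_X)
qed

lemma mono_single_pow: "mnm (Poly_Mapping.single v b) = X v ^ b"
proof (induction b)
  case 0 thus ?case by simp
next
  case (Suc b)
  have "Poly_Mapping.single v (Suc b) = Poly_Mapping.single v 1 + Poly_Mapping.single v b"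
    by (simp add: single_add[symmetric] One_nat_def)
  hence "mnm (Poly_Mapping.single v (Suc b)) = mnm (Poly_Mapping.single v 1) * mnm (Poly_Mapping.single v b)"
    by (simp only: mono_add)
  thus ?case using Suc by (simp add: X_def mnm_def)
qed

lemma Phi_mono: "(\<forall>v\<in>Poly_Mapping.keys \<mu>. 1 \<le> snd v) \<Longrightarrow> Phi \<alpha> (mnm \<mu>) = 0"
proof (induction \<mu> rule: update_induct)
  case const thus ?case using Phi_pC[of \<alpha> 1] by simp
next
  case (update f a b)
  have k: "Poly_Mapping.keys (Poly_Mapping.update a b f) = insert a (Poly_Mapping.keys f)"
    using update.hyps by (simp add: keys_update)
  have "Phi \<alpha> (mnm f) = 0" using update k by auto
  moreover have "1 \<le> snd a" using update.prems k by auto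
  ultimately show ?case
    by (simp add: update_as_add[OF update.hyps(1)] mono_add Phi_mult mono_single_pow Phi_X_pow)
qed

lemma sig_Dp: "good P \<Longrightarrow> sig \<alpha> (Dp P) = DD (sig \<alpha> P)"
proof -
  assume g: "good P"
  have "Phi \<alpha> P = 0"
  proof -
    have "Phi \<alpha> P = Phi \<alpha> (\<Sum>s\<in>Poly_Mapping.keys P. Poly_Mapping.single s (Poly_Mapping.lookup P s))"
      by (subst pm_expand) simp
    also have "\<dots> = (\<Sum>s\<in>Poly_Mapping.keys P. Phi \<alpha> (Poly_Mapping.single s (Poly_Mapping.lookup P s)))"
      by (rule Phi_sum)
    also have "\<dots> = 0"
    proof (rule sum.neutral, rule ballI)
      fix s assume "s \<in> Poly_Mapping.keys P"
      hence "\<forall>v\<in>Poly_Mapping.keys s. 1 \<le> snd v" using g by (auto simp: good_def)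
      thus "Phi \<alpha> (Poly_Mapping.single s (Poly_Mapping.lookup P s)) = 0"
        by (simp add: single_as_mono Phi_mult Phi_pC Phi_mono)
    qed
    finally show ?thesis .
  qed
  thus ?thesis by (simp add: Phi_def)
qed



definition Cc :: "nat \<Rightarrow> vec \<Rightarrow> dpoly \<Rightarrow> int \<Rightarrow> int \<Rightarrow> dpoly" where
  "Cc N \<alpha> P d t = cp (Lsing \<alpha> P d) (Ss N \<alpha>) t"

lemma Lsing_sig: "Lsing \<alpha> P d = U d * sig \<alpha> P"
  by (simp add: Lsing_def sig_def)

lemma Cc_add: "Cc N \<alpha> (P + Q) d t = Cc N \<alpha> P d t + Cc N \<alpha> Q d t"
  by (simp add: Cc_def Lsing_sig sig_add distrib_left cp_add)

lemma Cc_uminus: "Cc N \<alpha> (- P) d t = - Cc N \<alpha> P d t"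
  by (simp add: Cc_def Lsing_sig sig_uminus cp_uminus)

lemma Cc_diff: "Cc N \<alpha> (P - Q) d t = Cc N \<alpha> P d t - Cc N \<alpha> Q d t"
  by (simp add: Cc_def Lsing_sig sig_diff right_diff_distrib cp_diff)

lemma Cc_pC_mult: "Cc N \<alpha> (pC c * P) d t = pC c * Cc N \<alpha> P d t"
proof -
  have "Lsing \<alpha> (pC c * P) d = lC (pC c) * Lsing \<alpha> P d"
    by (simp add: Lsing_sig sig_mult sig_pC algebra_simps)
  thus ?thesis by (simp add: Cc_def cp_mult_lC)
qed

lemma Cc_const: "Cc N \<alpha> (pC c) d t = pC c * Ss N \<alpha> (t - d)"
proof -
  have "Lsing \<alpha> (pC c) d = lC (pC c) * (U d * Poly_Mapping.single 0 1)"
    by (simp add: Lsing_sig sig_pC mult.commute)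
  thus ?thesis by (simp add: Cc_def cp_mult_lC cp_mult_U cp_single U_def)
qed

lemma Cc_cur1_mult:
  "Cc N \<alpha> (cur N v 1 * P) d t = cur N v 1 * Cc N \<alpha> P d t - pC (ip N \<alpha> v) * Cc N \<alpha> P d (t + 1)"
proof -
  have "Lsing \<alpha> (cur N v 1 * P) d = lC (cur N v 1) * Lsing \<alpha> P d - lC (pC (ip N \<alpha> v)) * (U (- 1) * Lsing \<alpha> P d)"
    by (simp add: Lsing_sig sig_mult sig_cur1 algebra_simps)
  thus ?thesis by (simp add: Cc_def cp_diff cp_mult_lC cp_mult_U)
qed

lemma U_mult: "U a * U b = U (a + b)" by (simp add: U_def mult_single)

lemma cp_DD:
  "cp (DD L) (Ss N \<alpha>) t = Dp (cp L (Ss N \<alpha>) t) + cur N \<alpha> 1 * cp L (Ss N \<alpha>) t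
     - pC (of_int (t + 1)) * cp L (Ss N \<alpha>) (t + 1)"
proof -
  let ?S = "Ss N \<alpha>"
  have 1: "cp (Dl L) ?S t = Dp (cp L ?S t) - cp L (\<lambda>r. Dp (?S r)) t"
    by (simp add: Dp_cp)
  have "cp (du L) ?S t = cp L (\<lambda>r. pC (of_int (t + 1)) * ?S r - pC (of_int r) * ?S r) (t + 1)"
    by (simp add: cp_du pC_diff left_diff_distrib)
  also have "\<dots> = pC (of_int (t + 1)) * cp L ?S (t + 1) - cp L (\<lambda>r. pC (of_int r) * ?S r) (t + 1)"
    by (simp add: cp_S_diff cp_S_scale)
  also have "cp L (\<lambda>r. pC (of_int r) * ?S r) (t + 1) = cp L (\<lambda>r. pC (of_int (r + 1)) * ?S (r + 1)) t"
    by (rule cp_shift)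
  also have "\<dots> = cp L (\<lambda>r. Dp (?S r) + cur N \<alpha> 1 * ?S r) t"
    by (rule cp_cong) (rule Ss_rec)
  also have "\<dots> = cp L (\<lambda>r. Dp (?S r)) t + cur N \<alpha> 1 * cp L ?S t"
    by (simp add: cp_S_add cp_S_scale)
  finally have 2: "cp (du L) ?S t = pC (of_int (t + 1)) * cp L ?S (t + 1) - (cp L (\<lambda>r. Dp (?S r)) t + cur N \<alpha> 1 * cp L ?S t)" .
  show ?thesis by (simp add: DD_def cp_diff 1 2)
qed

lemma Cc_Dp:
  assumes "good P"
  shows "Cc N \<alpha> (Dp P) d t = Dp (Cc N \<alpha> P d t) + cur N \<alpha> 1 * Cc N \<alpha> P d t
     - pC (of_int (t + 1)) * Cc N \<alpha> P d (t + 1) + pC (of_int d) * Cc N \<alpha> P d (t + 1)"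
proof -
  let ?L = "Lsing \<alpha> P d"
  have "Lsing \<alpha> (Dp P) d = U d * DD (sig \<alpha> P)"
    by (simp add: Lsing_sig sig_Dp[OF assms])
  also have "\<dots> = DD ?L + lC (pC (of_int d)) * (U (- 1) * ?L)"
  proof -
    have "DD ?L = DD (U d) * sig \<alpha> P + U d * DD (sig \<alpha> P)" by (simp add: Lsing_sig DD_mult)
    moreover have "DD (U d) * sig \<alpha> P = - (lC (pC (of_int d)) * (U (- 1) * ?L))"
    proof -
      have e: "- 1 + d = d - 1" by simp
      have "U (- 1) * ?L = U (d - 1) * sig \<alpha> P"
        by (simp only: Lsing_sig mult.assoc[symmetric] U_mult e)
      thus ?thesis by (simp add: DD_U mult.assoc)
    qed
    ultimately show ?thesis by simp
  qed
  finally have "Lsing \<alpha> (Dp P) d = DD ?L + lC (pC (of_int d)) * (U (- 1) * ?L)" .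
  thus ?thesis by (simp add: Cc_def cp_add cp_mult_lC cp_mult_U cp_DD)
qed

lemma Cc_fder:
  assumes "good P" "of_int d = ip N \<alpha> \<beta>"
  shows "Cc N \<alpha> (Dp P + P * cur N \<beta> 1) d t = Dp (Cc N \<alpha> P d t) + (cur N \<alpha> 1 + cur N \<beta> 1) * Cc N \<alpha> P d t
     - pC (of_int (t + 1)) * Cc N \<alpha> P d (t + 1)"
proof -
  have "Cc N \<alpha> (Dp P + P * cur N \<beta> 1) d t = Cc N \<alpha> (Dp P) d t + Cc N \<alpha> (cur N \<beta> 1 * P) d t"
    by (simp only: Cc_add mult.commute[of P])
  also have "\<dots> = Dp (Cc N \<alpha> P d t) + cur N \<alpha> 1 * Cc N \<alpha> P d t
     - pC (of_int (t + 1)) * Cc N \<alpha> P d (t + 1) + pC (ip N \<alpha> \<beta>) * Cc N \<alpha> P d (t + 1)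
     + (cur N \<beta> 1 * Cc N \<alpha> P d t - pC (ip N \<alpha> \<beta>) * Cc N \<alpha> P d (t + 1))"
    by (simp only: Cc_Dp[OF assms(1)] Cc_cur1_mult assms(2))
  also have "\<dots> = Dp (Cc N \<alpha> P d t) + (cur N \<alpha> 1 + cur N \<beta> 1) * Cc N \<alpha> P d t
     - pC (of_int (t + 1)) * Cc N \<alpha> P d (t + 1)"
    by (simp add: algebra_simps)
  finally show ?thesis .
qed

lemma res_poly_Cc: "res_poly N \<alpha> P d = Cc N \<alpha> P d (- 1)"
proof -
  let ?L = "Lsing \<alpha> P d"
  have "Cc N \<alpha> P d (- 1) = (\<Sum>s\<in>Poly_Mapping.keys ?L. Poly_Mapping.lookup ?L s * Ss N \<alpha> (- 1 - s))"
    by (simp add: Cc_def cp_def pext_def)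
  also have "\<dots> = (\<Sum>s\<in>{s\<in>Poly_Mapping.keys ?L. s \<le> - 1}. Poly_Mapping.lookup ?L s * Ss N \<alpha> (- 1 - s))"
    by (rule sum.mono_neutral_right) (auto simp: Ss_def)
  also have "\<dots> = (\<Sum>r\<in>{r::nat. - 1 - int r \<in> Poly_Mapping.keys ?L}. Poly_Mapping.lookup ?L (- 1 - int r) * Sch N \<alpha> r)"
  proof (rule sum.reindex_bij_witness[where i="\<lambda>r. - 1 - int r" and j="\<lambda>s. nat (- 1 - s)"])
    fix s assume "s \<in> {s\<in>Poly_Mapping.keys ?L. s \<le> - 1}"
    hence s: "s \<in> Poly_Mapping.keys ?L" "s \<le> - 1" by auto
    have e: "- 1 - int (nat (- 1 - s)) = s" using s(2) by simp
    show "- 1 - int (nat (- 1 - s)) = s" by (rule e)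
    show "nat (- 1 - s) \<in> {r::nat. - 1 - int r \<in> Poly_Mapping.keys ?L}" using s(1) by (simp only: e mem_Collect_eq)
    show "Poly_Mapping.lookup ?L (- 1 - int (nat (- 1 - s))) * Sch N \<alpha> (nat (- 1 - s)) =
          Poly_Mapping.lookup ?L s * Ss N \<alpha> (- 1 - s)"
      using s(2) by (simp only: e Ss_def) simp
  next
    fix r assume "r \<in> {r::nat. - 1 - int r \<in> Poly_Mapping.keys ?L}"
    thus "nat (- 1 - (- 1 - int r)) = r" "- 1 - int r \<in> {s\<in>Poly_Mapping.keys ?L. s \<le> - 1}" by auto
  qed
  finally show ?thesis by (simp add: res_poly_def)
qed



lemma cur_scale: "cur N (\<lambda>j. c * v j) m = pC c * cur N v m"
  by (simp add: cur_def pC_mult sum_distrib_left mult.assoc)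
lemma cur_add: "cur N (\<lambda>j. v j + w j) m = cur N v m + cur N w m"
  by (simp add: cur_def pC_add distrib_right sum.distrib)
lemma cur_uminus: "cur N (- v) m = - cur N v m"
  by (simp add: cur_def pC_uminus sum_negf)
lemma cur_sum: "cur N (\<lambda>j. \<Sum>i\<in>I. f i j) m = (\<Sum>i\<in>I. cur N (f i) m)"
  by (simp add: cur_def pC_sum sum_distrib_right sum.swap[of _ I])
lemma cur_diff: "cur N (\<lambda>j. v j - w j) m = cur N v m - cur N w m"
  by (simp add: cur_def pC_diff left_diff_distrib sum_subtractf)

lemma ip_sym: "ip N x y = ip N y x" by (simp add: ip_def mult.commute)
lemma ip_scale: "ip N x (\<lambda>j. c * v j) = c * ip N x v"
  by (simp add: ip_def sum_distrib_left algebra_simps)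
lemma ip_add: "ip N x (\<lambda>j. v j + w j) = ip N x v + ip N x w"
  by (simp add: ip_def distrib_left sum.distrib)
lemma ip_uminus: "ip N x (- v) = - ip N x v"
  by (simp add: ip_def sum_negf)
lemma ip_sum: "ip N x (\<lambda>j. \<Sum>i\<in>I. f i j) = (\<Sum>i\<in>I. ip N x (f i))"
  by (simp add: ip_def sum_distrib_left sum.swap[of _ I])

definition jv :: "complex \<Rightarrow> (nat \<Rightarrow> vec) \<Rightarrow> vec \<Rightarrow> vec \<Rightarrow> nat \<Rightarrow> vec" where
  "jv \<kappa> a \<psi> \<xi> m = (\<lambda>j. \<kappa> * \<xi> j + \<psi> j + (\<Sum>i\<in>{1..m}. a i j))"

primrec GG :: "nat \<Rightarrow> complex \<Rightarrow> (nat \<Rightarrow> vec) \<Rightarrow> vec \<Rightarrow> vec \<Rightarrow> nat \<Rightarrow> vfield" where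
  "GG N \<kappa> a \<psi> \<xi> 0 = (pC (- 1), - \<xi>)"
| "GG N \<kappa> a \<psi> \<xi> (Suc m) = fadd (fscale \<kappa> (fder N (GG N \<kappa> a \<psi> \<xi> m))) (fmul (cur N (jv \<kappa> a \<psi> \<xi> m) 1) (GG N \<kappa> a \<psi> \<xi> m))"

lemma snd_GG: "snd (GG N \<kappa> a \<psi> \<xi> m) = - \<xi>"
  by (induction m) (simp_all add: fadd_def fscale_def fder_def)

lemma fst_GG_Suc: "fst (GG N \<kappa> a \<psi> \<xi> (Suc m)) =
   pC \<kappa> * (Dp (fst (GG N \<kappa> a \<psi> \<xi> m)) + fst (GG N \<kappa> a \<psi> \<xi> m) * cur N (- \<xi>) 1)
   + cur N (jv \<kappa> a \<psi> \<xi> m) 1 * fst (GG N \<kappa> a \<psi> \<xi> m)"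
  by (simp add: fadd_def fscale_def fder_def fmul_def snd_GG)

lemma good_GG: "good (fst (GG N \<kappa> a \<psi> \<xi> m))"
proof (induction m)
  case 0 thus ?case by (simp add: pC_uminus[symmetric])
next
  case (Suc m) thus ?case
    by (simp only: fst_GG_Suc) (intro good_add good_mult good_Dp good_cur good_pC; simp)
qed

lemma jv_Suc: "jv \<kappa> a \<psi> \<xi> (Suc m) = (\<lambda>j. jv \<kappa> a \<psi> \<xi> m j + a (Suc m) j)"
  by (simp add: jv_def add.assoc)

lemma cur_jv: "cur N (jv \<kappa> a \<psi> \<xi> m) 1 = pC \<kappa> * cur N \<xi> 1 + cur N \<psi> 1 + (\<Sum>i\<in>{1..m}. cur N (a i) 1)"
  by (simp add: jv_def cur_add cur_scale cur_sum)

lemma ip_jv: "ip N x (jv \<kappa> a \<psi> \<xi> m) = \<kappa> * ip N x \<xi> + ip N x \<psi> + (\<Sum>i\<in>{1..m}. ip N x (a i))"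
  by (simp add: jv_def ip_add ip_scale ip_sum)

lemma Cc_GG_Suc:
  assumes "of_int d = ip N \<alpha> (- \<xi>)"
  shows "Cc N \<alpha> (fst (GG N \<kappa> a \<psi> \<xi> (Suc m))) d t =
    pC \<kappa> * (Dp (Cc N \<alpha> (fst (GG N \<kappa> a \<psi> \<xi> m)) d t)
             + (cur N \<alpha> 1 + cur N (- \<xi>) 1) * Cc N \<alpha> (fst (GG N \<kappa> a \<psi> \<xi> m)) d t
             - pC (of_int (t + 1)) * Cc N \<alpha> (fst (GG N \<kappa> a \<psi> \<xi> m)) d (t + 1))
    + (cur N (jv \<kappa> a \<psi> \<xi> m) 1 * Cc N \<alpha> (fst (GG N \<kappa> a \<psi> \<xi> m)) d t
       - pC (ip N \<alpha> (jv \<kappa> a \<psi> \<xi> m)) * Cc N \<alpha> (fst (GG N \<kappa> a \<psi> \<xi> m)) d (t + 1))"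
proof -
  let ?P = "fst (GG N \<kappa> a \<psi> \<xi> m)"
  have "Cc N \<alpha> (fst (GG N \<kappa> a \<psi> \<xi> (Suc m))) d t =
     pC \<kappa> * Cc N \<alpha> (Dp ?P + ?P * cur N (- \<xi>) 1) d t + Cc N \<alpha> (cur N (jv \<kappa> a \<psi> \<xi> m) 1 * ?P) d t"
    by (simp only: fst_GG_Suc Cc_add[of N \<alpha> "pC \<kappa> * (Dp ?P + ?P * cur N (- \<xi>) 1)"] Cc_pC_mult)
  thus ?thesis by (simp only: Cc_fder[OF good_GG assms] Cc_cur1_mult)
qed

lemma Cc_GG_0: "Cc N \<alpha> (fst (GG N \<kappa> a \<psi> \<xi> 0)) d t = pC (- 1) * Ss N \<alpha> (t - d)"
  by (simp add: Cc_const)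

lemma GG_regular:
  assumes "ip N \<alpha> \<xi> = 0" "\<forall>l<m. ip N \<alpha> (jv \<kappa> a \<psi> \<xi> l) = 0"
  shows "Cc N \<alpha> (fst (GG N \<kappa> a \<psi> \<xi> m)) 0 t = fst (GG N \<kappa> a \<psi> \<xi> m) * Ss N \<alpha> t"
  using assms(2)
proof (induction m arbitrary: t)
  case 0 show ?case using Cc_const[of N \<alpha> "- 1" 0 t] by simp
next
  case (Suc m)
  let ?P = "fst (GG N \<kappa> a \<psi> \<xi> m)"
  have d: "of_int 0 = ip N \<alpha> (- \<xi>)" using assms(1) by (simp add: ip_uminus)
  have IH: "\<And>t. Cc N \<alpha> ?P 0 t = ?P * Ss N \<alpha> t" using Suc by auto
  have j: "ip N \<alpha> (jv \<kappa> a \<psi> \<xi> m) = 0" using Suc.prems by auto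
  have r: "pC (of_int (t + 1)) * Ss N \<alpha> (t + 1) = Dp (Ss N \<alpha> t) + cur N \<alpha> 1 * Ss N \<alpha> t" by (rule Ss_rec)
  have "Cc N \<alpha> (fst (GG N \<kappa> a \<psi> \<xi> (Suc m))) 0 t =
    pC \<kappa> * (Dp (?P * Ss N \<alpha> t) + (cur N \<alpha> 1 + cur N (- \<xi>) 1) * (?P * Ss N \<alpha> t)
             - ?P * (pC (of_int (t + 1)) * Ss N \<alpha> (t + 1)))
    + cur N (jv \<kappa> a \<psi> \<xi> m) 1 * (?P * Ss N \<alpha> t)"
    by (simp only: Cc_GG_Suc[OF d] IH j pC_0 mult_zero_left diff_zero) (simp add: algebra_simps)
  also have "\<dots> = fst (GG N \<kappa> a \<psi> \<xi> (Suc m)) * Ss N \<alpha> t"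
    by (simp only: r fst_GG_Suc) (simp add: Dp_mult algebra_simps)
  finally show ?case .
qed



lemma Hcal_cur: "Hcal N n k a \<psi> \<xi> = cur N (\<lambda>j. ell n k * \<xi> j + (\<Sum>i\<in>{1..n-1}. ((of_nat n - of_nat i) / of_nat n) * a i j) + \<psi> j) 1"
  by (simp only: Hcal_def cur_add cur_scale cur_sum)

lemma cur_comb: "pC c1 * cur N v1 m - pC c2 * cur N v2 m = cur N (\<lambda>j. c1 * v1 j - c2 * v2 j) m"
  by (simp add: cur_diff cur_scale)

lemma cur_cong: "(\<And>j. v j = w j) \<Longrightarrow> cur N v m = cur N w m"
proof -
  assume "\<And>j. v j = w j"
  hence "v = w" by (rule ext)
  thus ?thesis by simp
qed

lemma Hcal_comb:
  assumes "n = Suc (Suc p)"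
  shows "pC (of_nat n) * Hcal N n k a \<psi> \<xi> - pC (of_nat n - 1) * Hcal N (n - 1) (k + 1) a \<psi> \<xi>
      = cur N (jv (k + of_nat n - 1) a \<psi> \<xi> (n - 1)) 1"
proof -
  have nm1: "(of_nat n - 1 :: complex) = of_nat (Suc p)" using assms by simp
  have nz1: "(of_nat n :: complex) \<noteq> 0" using assms by (simp only: of_nat_eq_0_iff) 
  have nz2: "(of_nat (Suc p) :: complex) \<noteq> 0" by (simp only: of_nat_eq_0_iff)
  have nz0: "n \<noteq> 0" using assms by simp
  have n1: "n - 1 = Suc p" "Suc p - 1 = p" using assms by auto
  show ?thesis
    unfolding Hcal_cur nm1 cur_comb n1
  proof (rule cur_cong)
    fix j
    have S1: "of_nat n * (\<Sum>i\<in>{1..Suc p}. ((of_nat n - of_nat i) / of_nat n) * a i j)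
        = (\<Sum>i\<in>{1..p}. (of_nat n - of_nat i) * a i j) + a (Suc p) j"
    proof -
      have "of_nat n * (\<Sum>i\<in>{1..Suc p}. ((of_nat n - of_nat i) / of_nat n) * a i j)
          = (\<Sum>i\<in>{1..Suc p}. (of_nat n - of_nat i) * a i j)"
        unfolding sum_distrib_left by (rule sum.cong) (simp_all add: nz0)
      also have "\<dots> = (\<Sum>i\<in>{1..p}. (of_nat n - of_nat i) * a i j) + (of_nat n - of_nat (Suc p)) * a (Suc p) j"
        by simp
      also have "(of_nat n - of_nat (Suc p) :: complex) = 1" using assms by simp
      finally show ?thesis by simp
    qed
    have S2: "of_nat (Suc p) * (\<Sum>i\<in>{1..p}. ((of_nat (Suc p) - of_nat i) / of_nat (Suc p)) * a i j)
        = (\<Sum>i\<in>{1..p}. (of_nat (Suc p) - of_nat i) * a i j)"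
      unfolding sum_distrib_left by (rule sum.cong) (simp_all add: nz2 del: of_nat_Suc)
    have S3: "(\<Sum>i\<in>{1..p}. (of_nat n - of_nat i) * a i j) - (\<Sum>i\<in>{1..p}. (of_nat (Suc p) - of_nat i) * a i j)
        = (\<Sum>i\<in>{1..p}. a i j)"
      by (simp add: sum_subtractf[symmetric] assms algebra_simps)
    have E: "(of_nat n :: complex) * ell n k - of_nat (Suc p) * ell (Suc p) (k + 1) = k + of_nat n - 1"
      using nz1 nz2 unfolding ell_def assms by (simp add: field_simps del: of_nat_Suc) (simp add: algebra_simps)
    have "of_nat n * (ell n k * \<xi> j + (\<Sum>i\<in>{1..Suc p}. ((of_nat n - of_nat i) / of_nat n) * a i j) + \<psi> j)
      - of_nat (Suc p) * (ell (Suc p) (k + 1) * \<xi> j + (\<Sum>i\<in>{1..p}. ((of_nat (Suc p) - of_nat i) / of_nat (Suc p)) * a i j) + \<psi> j)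
      = (of_nat n * ell n k - of_nat (Suc p) * ell (Suc p) (k + 1)) * \<xi> j
        + (of_nat n * (\<Sum>i\<in>{1..Suc p}. ((of_nat n - of_nat i) / of_nat n) * a i j)
           - of_nat (Suc p) * (\<Sum>i\<in>{1..p}. ((of_nat (Suc p) - of_nat i) / of_nat (Suc p)) * a i j))
        + (of_nat n - of_nat (Suc p)) * \<psi> j"
      by (simp only: algebra_simps)
    also have "\<dots> = (k + of_nat n - 1) * \<xi> j + (\<Sum>i\<in>{1..Suc p}. a i j) + \<psi> j"
    proof -
      have o: "(of_nat n - of_nat (Suc p) :: complex) = 1" using assms by simp
      show ?thesis by (simp only: E S1 S2 o) (simp add: S3[symmetric] algebra_simps)
    qed
    finally show "of_nat n * (ell n k * \<xi> j + (\<Sum>i\<in>{1..Suc p}. ((of_nat n - of_nat i) / of_nat n) * a i j) + \<psi> j)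
      - of_nat (Suc p) * (ell (Suc p) (k + 1) * \<xi> j + (\<Sum>i\<in>{1..p}. ((of_nat (Suc p) - of_nat i) / of_nat (Suc p)) * a i j) + \<psi> j)
      = jv (k + of_nat n - 1) a \<psi> \<xi> (Suc p) j"
      by (simp add: jv_def algebra_simps)
  qed
qed



locale scrctx =
  fixes n :: nat and k :: complex and a :: "nat \<Rightarrow> vec" and \<psi> \<xi> :: vec
  assumes n2: "n \<ge> 2"
    and aa: "\<forall>i\<in>{1..n-1}. ip (n+1) (a i) (a i) = 2 * (k + of_nat n)"
    and aa1: "\<forall>i\<in>{1..n-2}. ip (n+1) (a i) (a (i+1)) = - (k + of_nat n)"
    and aa0: "\<forall>i\<in>{1..n-1}. \<forall>j\<in>{1..n-1}. i + 1 < j \<longrightarrow> ip (n+1) (a i) (a j) = 0"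
    and a1p: "ip (n+1) (a 1) \<psi> = - (k + of_nat n)"
    and aip: "\<forall>i\<in>{2..n-1}. ip (n+1) (a i) \<psi> = 0"
    and aix: "\<forall>i\<in>{1..n-1}. ip (n+1) (a i) \<xi> = 0"
    and pp: "ip (n+1) \<psi> \<psi> = 1" and px: "ip (n+1) \<psi> \<xi> = 1"
begin

abbreviation "KK \<equiv> k + of_nat n"
abbreviation "kap \<equiv> k + of_nat n - 1"
abbreviation "G m \<equiv> GG (n+1) kap a \<psi> \<xi> m"
abbreviation "J m \<equiv> jv kap a \<psi> \<xi> m"

lemma ipaa:
  assumes "i \<in> {1..n-1}" "l \<in> {1..n-1}"
  shows "ip (n+1) (a i) (a l) = (if l = i then 2 * KK else if l = i + 1 \<or> l + 1 = i then - KK else 0)"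
proof -
  consider "l = i" | "l = i + 1" | "l + 1 = i" | "i + 1 < l" | "l + 1 < i" by linarith
  thus ?thesis
  proof cases
    case 1 thus ?thesis using aa assms by auto
  next
    case 2 thus ?thesis using aa1 assms by auto
  next
    case 3
    hence "ip (n+1) (a l) (a (l+1)) = - KK" using aa1 assms by auto
    thus ?thesis using 3 by (auto simp: ip_sym)
  next
    case 4 thus ?thesis using aa0 assms by auto
  next
    case 5
    hence "ip (n+1) (a l) (a i) = 0" using aa0 assms by auto
    thus ?thesis using 5 by (auto simp: ip_sym)
  qed
qed

lemma sum_delta1: "(\<Sum>l\<in>{1..m::nat}. if l = c then x else 0) = (if 1 \<le> c \<and> c \<le> m then x else (0::complex))"
  by (subst sum.delta) auto

lemma sum_ipaa:
  assumes "i \<in> {1..n-1}" "m \<le> n - 1"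
  shows "(\<Sum>l\<in>{1..m}. ip (n+1) (a i) (a l)) =
     (if i \<le> m then 2 * KK else 0) - (if i + 1 \<le> m then KK else 0) - (if 2 \<le> i \<and> i - 1 \<le> m then KK else 0)"
proof -
  have "(\<Sum>l\<in>{1..m}. ip (n+1) (a i) (a l)) =
    (\<Sum>l\<in>{1..m}. (if l = i then 2 * KK else 0) - (if l = i + 1 then KK else 0) - (if l = i - 1 then (if 2 \<le> i then KK else 0) else 0))"
  proof (rule sum.cong)
    fix l assume l: "l \<in> {1..m}"
    hence l': "l \<in> {1..n-1}" using assms by auto
    show "ip (n+1) (a i) (a l) = (if l = i then 2 * KK else 0) - (if l = i + 1 then KK else 0) - (if l = i - 1 then (if 2 \<le> i then KK else 0) else 0)"
      using ipaa[OF assms(1) l'] l assms(1) by auto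
  qed simp
  also have "\<dots> = (if i \<le> m then 2 * KK else 0) - (if i + 1 \<le> m then KK else 0) - (if 2 \<le> i \<and> i - 1 \<le> m then KK else 0)"
    using assms(1) by (simp only: sum_subtractf sum_delta1) auto
  finally show ?thesis .
qed

lemma ip_a_J:
  assumes "i \<in> {1..n-1}" "m \<le> n - 1"
  shows "ip (n+1) (a i) (J m) = (if i = 1 then - KK else 0) +
     ((if i \<le> m then 2 * KK else 0) - (if i + 1 \<le> m then KK else 0) - (if 2 \<le> i \<and> i - 1 \<le> m then KK else 0))"
proof -
  have "ip (n+1) (a i) \<psi> = (if i = 1 then - KK else 0)"
    using a1p aip assms(1) by auto
  thus ?thesis using aix assms by (simp add: ip_jv sum_ipaa)
qed

lemma ip_a_J_c1: "i \<in> {1..n-1} \<Longrightarrow> m \<le> n - 1 \<Longrightarrow> i + 1 \<le> m \<Longrightarrow> ip (n+1) (a i) (J m) = 0"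
  by (auto simp: ip_a_J)
lemma ip_a_J_c2: "i \<in> {1..n-1} \<Longrightarrow> ip (n+1) (a i) (J i) = KK"
  by (simp add: ip_a_J)
lemma ip_a_J_c3: "i \<in> {1..n-1} \<Longrightarrow> m + 1 = i \<Longrightarrow> ip (n+1) (a i) (J m) = - KK"
  by (auto simp: ip_a_J)
lemma ip_a_J_c4: "i \<in> {1..n-1} \<Longrightarrow> m + 2 \<le> i \<Longrightarrow> ip (n+1) (a i) (J m) = 0"
  by (auto simp: ip_a_J)

lemma ip_p_J: "1 \<le> m \<Longrightarrow> m \<le> n - 1 \<Longrightarrow> ip (n+1) \<psi> (J m) = 0"
proof -
  assume m: "1 \<le> m" "m \<le> n - 1"
  have "(\<Sum>l\<in>{1..m}. ip (n+1) \<psi> (a l)) = (\<Sum>l\<in>{1..m}. if l = 1 then - KK else 0)"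
  proof (rule sum.cong)
    fix l assume "l \<in> {1..m}"
    thus "ip (n+1) \<psi> (a l) = (if l = 1 then - KK else 0)"
      using a1p aip m by (auto simp: ip_sym)
  qed simp
  also have "\<dots> = - KK" using m by (simp only: sum_delta1) simp
  finally show ?thesis by (simp add: ip_jv pp px)
qed

lemma ip_p_J0: "ip (n+1) \<psi> (J 0) = KK"
  by (simp add: ip_jv pp px)

lemma cur_J0: "cur (n+1) (J 0) 1 = pC kap * cur (n+1) \<xi> 1 + cur (n+1) \<psi> 1"
  by (simp add: cur_jv)

lemma pC_KK: "pC KK = pC kap + 1"
proof -
  have "KK = kap + 1" by simp
  hence "pC KK = pC (kap + 1)" by (rule arg_cong)
  thus ?thesis by (simp only: pC_add pC_1)
qed

lemma claimA: "1 \<le> m \<Longrightarrow> m \<le> n \<Longrightarrow> Cc (n+1) \<psi> (fst (G m)) (- 1) (- 1) = 0"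
proof (induction m)
  case 0 thus ?case by simp
next
  case (Suc m)
  have d: "of_int (- 1) = ip (n+1) \<psi> (- \<xi>)" by (simp add: ip_uminus px)
  show ?case
  proof (cases "m = 0")
    case True
    have c1: "Cc (n+1) \<psi> (fst (G 0)) (- 1) (- 1) = pC (- 1)"
      using Cc_GG_0[of "n+1" \<psi> kap a \<psi> \<xi> "- 1" "- 1"] by (simp add: Ss_0)
    have c2: "Cc (n+1) \<psi> (fst (G 0)) (- 1) (- 1 + 1) = pC (- 1) * cur (n+1) \<psi> 1"
      using Cc_GG_0[of "n+1" \<psi> kap a \<psi> \<xi> "- 1" 0] by (simp add: Ss_1)
    show ?thesis
      unfolding True
      by (simp only: Cc_GG_Suc[OF d] c1 c2 ip_p_J0 cur_J0 cur_uminus pC_KK Dp_pC)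
         (simp add: pC_uminus algebra_simps)
  next
    case False
    hence IH: "Cc (n+1) \<psi> (fst (G m)) (- 1) (- 1) = 0" using Suc by auto
    have j: "ip (n+1) \<psi> (J m) = 0" using False Suc.prems by (intro ip_p_J) auto
    show ?thesis by (simp only: Cc_GG_Suc[OF d] IH j) simp
  qed
qed

lemma claimB: "m \<le> n \<Longrightarrow> 1 \<le> i \<Longrightarrow> i < m \<Longrightarrow> Cc (n+1) (a i) (fst (G m)) 0 (- 1) = 0"
proof (induction m arbitrary: i)
  case 0 thus ?case by simp
next
  case (Suc m)
  have iI: "i \<in> {1..n-1}" using Suc.prems by auto
  have d: "of_int 0 = ip (n+1) (a i) (- \<xi>)" using aix iI by (simp add: ip_uminus)
  show ?case
  proof (cases "i < m")
    case True
    hence IH: "Cc (n+1) (a i) (fst (G m)) 0 (- 1) = 0" using Suc by auto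
    have j: "ip (n+1) (a i) (J m) = 0" using True Suc.prems iI by (intro ip_a_J_c1) auto
    show ?thesis by (simp only: Cc_GG_Suc[OF d] IH j) simp
  next
    case False
    hence im: "i = m" using Suc.prems by auto
    then obtain p where p: "m = Suc p" using Suc.prems by (cases m) auto
    let ?P = "fst (G p)"
    let ?A = "cur (n+1) (a m) 1"
    let ?Y = "cur (n+1) \<xi> 1"
    let ?b2 = "cur (n+1) (J p) 1"
    let ?b1 = "cur (n+1) (J m) 1"
    have mI: "m \<in> {1..n-1}" using iI im by simp
    have dm: "of_int 0 = ip (n+1) (a m) (- \<xi>)" using d im by simp
    have reg: "\<And>t. Cc (n+1) (a m) ?P 0 t = ?P * Ss (n+1) (a m) t"
    proof (rule GG_regular)
      show "ip (n+1) (a m) \<xi> = 0" using aix mI by auto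
      show "\<forall>l<p. ip (n+1) (a m) (J l) = 0" using mI p by (auto intro: ip_a_J_c4)
    qed
    have r1: "Cc (n+1) (a m) ?P 0 (- 1) = 0" by (simp add: reg Ss_neg)
    have r2: "Cc (n+1) (a m) ?P 0 (- 1 + 1) = ?P" by (simp add: reg Ss_0)
    have r3: "Cc (n+1) (a m) ?P 0 (0 + 1) = ?P * ?A" by (simp add: reg Ss_1)
    have r2': "Cc (n+1) (a m) ?P 0 0 = ?P" using r2 by simp
    have jp: "ip (n+1) (a m) (J p) = - KK" using mI p by (intro ip_a_J_c3) auto
    have jm: "ip (n+1) (a m) (J m) = KK" using mI by (rule ip_a_J_c2)
    have b12: "?b1 = ?b2 + ?A" by (simp add: p jv_Suc cur_add)
    have C1: "Cc (n+1) (a m) (fst (G m)) 0 (- 1) = pC KK * ?P"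
    proof -
      have "Cc (n+1) (a m) (fst (G m)) 0 (- 1) =
        pC kap * (Dp (Cc (n+1) (a m) ?P 0 (- 1)) + (?A + cur (n+1) (- \<xi>) 1) * Cc (n+1) (a m) ?P 0 (- 1)
             - pC (of_int (- 1 + 1)) * Cc (n+1) (a m) ?P 0 (- 1 + 1))
        + (?b2 * Cc (n+1) (a m) ?P 0 (- 1) - pC (ip (n+1) (a m) (J p)) * Cc (n+1) (a m) ?P 0 (- 1 + 1))"
        unfolding p by (rule Cc_GG_Suc[OF dm[unfolded p]])
      also have "\<dots> = pC KK * ?P"
        by (simp only: r1 r2 jp pC_uminus) simp
      finally show ?thesis .
    qed
    have C0: "Cc (n+1) (a m) (fst (G m)) 0 0 =
        pC kap * (Dp ?P + (?A - ?Y) * ?P - ?P * ?A) + ?b2 * ?P + pC KK * (?P * ?A)"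
    proof -
      have "Cc (n+1) (a m) (fst (G m)) 0 0 =
        pC kap * (Dp (Cc (n+1) (a m) ?P 0 0) + (?A + cur (n+1) (- \<xi>) 1) * Cc (n+1) (a m) ?P 0 0
             - pC (of_int (0 + 1)) * Cc (n+1) (a m) ?P 0 (0 + 1))
        + (?b2 * Cc (n+1) (a m) ?P 0 0 - pC (ip (n+1) (a m) (J p)) * Cc (n+1) (a m) ?P 0 (0 + 1))"
        unfolding p by (rule Cc_GG_Suc[OF dm[unfolded p]])
      also have "\<dots> = pC kap * (Dp ?P + (?A - ?Y) * ?P - ?P * ?A) + ?b2 * ?P + pC KK * (?P * ?A)"
        by (simp only: r2' r3 jp cur_uminus pC_uminus) simp
      finally show ?thesis .
    qed
    have "Cc (n+1) (a m) (fst (G (Suc m))) 0 (- 1) =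
        pC kap * (Dp (Cc (n+1) (a m) (fst (G m)) 0 (- 1))
             + (?A + cur (n+1) (- \<xi>) 1) * Cc (n+1) (a m) (fst (G m)) 0 (- 1)
             - pC (of_int (- 1 + 1)) * Cc (n+1) (a m) (fst (G m)) 0 (- 1 + 1))
        + (?b1 * Cc (n+1) (a m) (fst (G m)) 0 (- 1) - pC (ip (n+1) (a m) (J m)) * Cc (n+1) (a m) (fst (G m)) 0 (- 1 + 1))"
      by (rule Cc_GG_Suc[OF dm])
    also have "\<dots> = pC kap * (pC KK * Dp ?P + (?A - ?Y) * (pC KK * ?P))
        + (?b2 + ?A) * (pC KK * ?P) - pC KK * (pC kap * (Dp ?P + (?A - ?Y) * ?P - ?P * ?A) + ?b2 * ?P + pC KK * (?P * ?A))"
    proof -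
      have z: "(- 1 + 1 :: int) = 0" by simp
      show ?thesis by (simp only: z C1 C0 jm b12 cur_uminus Dp_pC_mult) (simp add: algebra_simps)
    qed
    also have "\<dots> = 0"
      by (simp only: pC_KK) (simp add: algebra_simps)
    finally show ?thesis using im by simp
  qed
qed

lemma fst_G_Fcal:
  "1 \<le> m \<Longrightarrow> fst (G m) = - Pcal (KK - of_nat m) m (\<lambda>i. cur (n+1) (a i) 1) (cur (n+1) \<psi> 1)"
proof (induction m)
  case 0 thus ?case by simp
next
  case (Suc m)
  let ?A = "\<lambda>i. cur (n+1) (a i) 1"
  let ?Q = "cur (n+1) \<psi> 1"
  let ?Y = "cur (n+1) \<xi> 1"
  show ?case
  proof (cases "m = 0")
    case True
    show ?thesis unfolding True
      by (simp only: fst_GG_Suc cur_J0 cur_uminus Dp_pC) (simp add: pC_uminus Dp_uminus algebra_simps)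
  next
    case False
    then obtain p where p: "m = Suc p" by (cases m) auto
    have IH: "fst (G m) = - Pcal (KK - of_nat m) m ?A ?Q" using Suc False by auto
    have e1: "KK - of_nat (Suc m) + of_nat m = kap" by simp
    have e2: "KK - of_nat (Suc m) + 1 = KK - of_nat m" by simp
    let ?P = "Pcal (KK - of_nat m) m ?A ?Q"
    have PS: "Pcal (KK - of_nat (Suc m)) (Suc m) ?A ?Q =
        pC kap * Dp ?P + (?Q + (\<Sum>i\<in>{1..m}. ?A i)) * ?P"
      unfolding p by (simp only: Pcal.simps(3) e1[unfolded p] e2[unfolded p])
    have "fst (G (Suc m)) = pC kap * (Dp (- ?P) + (- ?P) * (- ?Y)) + (pC kap * ?Y + ?Q + (\<Sum>i\<in>{1..m}. ?A i)) * (- ?P)"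
      by (simp only: fst_GG_Suc cur_jv cur_uminus IH)
    also have "\<dots> = - (pC kap * Dp ?P + (?Q + (\<Sum>i\<in>{1..m}. ?A i)) * ?P)"
      by (simp add: Dp_uminus algebra_simps)
    also have "\<dots> = - Pcal (KK - of_nat (Suc m)) (Suc m) ?A ?Q"
      by (simp only: PS)
    finally show ?thesis .
  qed
qed

lemma G_Fcal: "1 \<le> m \<Longrightarrow> G m = Fcal (n+1) m (KK - of_nat m) a \<psi> \<xi>"
  using fst_G_Fcal[of m] snd_GG[of "n+1" kap a \<psi> \<xi> m]
  by (simp add: Fcal_def prod_eq_iff)

lemma main:
  "in_W n a \<psi> \<xi> (Fcal (n+1) n k a \<psi> \<xi>)
    \<and> Fcal (n+1) n k a \<psi> \<xi> =
        fadd (fscale (k + of_nat n - 1) (fder (n+1) (Fcal (n+1) (n-1) (k+1) a \<psi> \<xi>)))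
         (fmul (pC (of_nat n) * Hcal (n+1) n k a \<psi> \<xi>
                - pC (of_nat n - 1) * Hcal (n+1) (n-1) (k+1) a \<psi> \<xi>)
               (Fcal (n+1) (n-1) (k+1) a \<psi> \<xi>))"
proof -
  obtain p where p: "n = Suc (Suc p)" using n2 by (metis add_2_eq_Suc le_Suc_ex)
  have Fn: "Fcal (n+1) n k a \<psi> \<xi> = G n" using G_Fcal[of n] n2 by simp
  have Fn1: "Fcal (n+1) (n-1) (k+1) a \<psi> \<xi> = G (n - 1)"
  proof -
    have "KK - of_nat (n - 1) = k + 1" using n2 by (simp add: of_nat_diff)
    thus ?thesis using G_Fcal[of "n - 1"] n2 by simp
  qed
  have Gn: "G n = fadd (fscale kap (fder (n+1) (G (n - 1)))) (fmul (cur (n+1) (J (n - 1)) 1) (G (n - 1)))"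
    using p by simp
  have H: "pC (of_nat n) * Hcal (n+1) n k a \<psi> \<xi> - pC (of_nat n - 1) * Hcal (n+1) (n-1) (k+1) a \<psi> \<xi> = cur (n+1) (J (n - 1)) 1"
    by (rule Hcal_comb[OF p])
  have second: "Fcal (n+1) n k a \<psi> \<xi> =
        fadd (fscale (k + of_nat n - 1) (fder (n+1) (Fcal (n+1) (n-1) (k+1) a \<psi> \<xi>)))
         (fmul (pC (of_nat n) * Hcal (n+1) n k a \<psi> \<xi>
                - pC (of_nat n - 1) * Hcal (n+1) (n-1) (k+1) a \<psi> \<xi>)
               (Fcal (n+1) (n-1) (k+1) a \<psi> \<xi>))"
    unfolding Fn Fn1 H by (rule Gn)
  have sndF: "snd (Fcal (n+1) n k a \<psi> \<xi>) = (\<lambda>j. of_int (- 1) * \<xi> j)"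
    by (simp add: Fcal_def fun_eq_iff)
  have Ei: "commutes_scr (n+1) (a i) (Fcal (n+1) n k a \<psi> \<xi>)" if i: "i \<in> {1..n-1}" for i
  proof -
    have "ip (n+1) (a i) (snd (Fcal (n+1) n k a \<psi> \<xi>)) = of_int 0"
      using aix i by (simp add: Fcal_def ip_uminus)
    moreover have "res_poly (n+1) (a i) (fst (Fcal (n+1) n k a \<psi> \<xi>)) 0 = 0"
      unfolding res_poly_Cc Fn using claimB[of n i] i n2 by auto
    ultimately show ?thesis unfolding commutes_scr_def by blast
  qed
  have Ps: "commutes_scr (n+1) \<psi> (Fcal (n+1) n k a \<psi> \<xi>)"
  proof -
    have "ip (n+1) \<psi> (snd (Fcal (n+1) n k a \<psi> \<xi>)) = of_int (- 1)"
      using px by (simp add: Fcal_def ip_uminus)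
    moreover have "res_poly (n+1) \<psi> (fst (Fcal (n+1) n k a \<psi> \<xi>)) (- 1) = 0"
      unfolding res_poly_Cc Fn using claimA[of n] n2 by auto
    ultimately show ?thesis unfolding commutes_scr_def by blast
  qed
  have "in_W n a \<psi> \<xi> (Fcal (n+1) n k a \<psi> \<xi>)"
    unfolding in_W_def using sndF Ei Ps by blast
  with second show ?thesis by blast
qed

end


theorem lemma2p3:
  fixes n :: nat and k :: complex and a :: "nat \<Rightarrow> vec" and \<psi> \<xi> :: vec
  assumes "n \<ge> 2" and "k \<noteq> - of_nat n"
    and "\<forall>i\<in>{1..n-1}. ip (n+1) (a i) (a i) = 2 * (k + of_nat n)"
    and "\<forall>i\<in>{1..n-2}. ip (n+1) (a i) (a (i+1)) = - (k + of_nat n)"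
    and "\<forall>i\<in>{1..n-1}. \<forall>j\<in>{1..n-1}. i + 1 < j \<longrightarrow> ip (n+1) (a i) (a j) = 0"
    and "ip (n+1) (a 1) \<psi> = - (k + of_nat n)"
    and "\<forall>i\<in>{2..n-1}. ip (n+1) (a i) \<psi> = 0"
    and "\<forall>i\<in>{1..n-1}. ip (n+1) (a i) \<xi> = 0"
    and "ip (n+1) \<psi> \<psi> = 1" and "ip (n+1) \<psi> \<xi> = 1" and "ip (n+1) \<xi> \<xi> = 0"
  shows "in_W n a \<psi> \<xi> (Fcal (n+1) n k a \<psi> \<xi>)
    \<and> Fcal (n+1) n k a \<psi> \<xi> =
        fadd (fscale (k + of_nat n - 1) (fder (n+1) (Fcal (n+1) (n-1) (k+1) a \<psi> \<xi>)))
         (fmul (pC (of_nat n) * Hcal (n+1) n k a \<psi> \<xi>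
                - pC (of_nat n - 1) * Hcal (n+1) (n-1) (k+1) a \<psi> \<xi>)
               (Fcal (n+1) (n-1) (k+1) a \<psi> \<xi>))"
  proof -
  interpret scrctx n k a \<psi> \<xi>
    by (rule scrctx.intro) (rule assms)+
  show ?thesis by (rule main)
qed

end
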